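(* Let $\sigma$ be as in the context (in particular $\sigma(1)<1$), with the exponent $\alpha$ of condition $(\Sigma 3)$ satisfying $\alpha>1$, and assume that $M_1(\phi_\sigma')<+\infty$. Let $f\in C(I)$ be such that $$\|K_n(f,\cdot)-f(\cdot)\|_\infty=\mathcal O(n^{-\nu}),\qquad n\to+\infty,$$ for some $0<\nu<1$. Then $f\in Lip(\nu)$.
   Context: $\sigma:\mathbb R\to\mathbb R$ is a non-decreasing sigmoidal function ($\lim_{x\to-\infty}\sigma(x)=0$, $\lim_{x\to+\infty}\sigma(x)=1$) satisfying: $(\Sigma1)$ $\sigma(x)-1/2$ is an odd function; $(\Sigma2)$ $\sigma\in C^2(\mathbb R)$ and $\sigma$ is concave on $[0,+\infty)$; $(\Sigma3)$ $\sigma(x)=\mathcal O(|x|^{-1-\alpha})$ as $x\to-\infty$, for some $\alpha>0$; moreover $\sigma(1)<1$ (standing assumption under which the Kantorovich operators below are well defined). Set $\phi_\sigma(x):=\frac12[\sigma(x+1)-\sigma(x-1)]$ and $\Psi_\sigma(\mathbf x):=\prod_{i=1}^d\phi_\sigma(x_i)$ for $\mathbf x\in\mathbb R^d$. For $g:\mathbb R\to\mathbb R$ and $\beta\ge0$, $M_\beta(g):=\sup_{x\in\mathbb R}\sum_{k\in\mathbb Z}|g(x-k)|\,|k-x|^\beta$. Let $I=\prod_{i=1}^d[a_i,b_i]$ with $a_i<b_i$; $C(I)$ carries the sup-norm. Let $\mathcal K_n:=\{\mathbf k\in\mathbb Z^d:\lceil na_i\rceil\le k_i\le\lfloor nb_i\rfloor-1,\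 i=1,\dots,d\}$. For locally integrable $f:I\to\mathbb R$ and $n\in\mathbb N^+$, the Kantorovich neural network operators are $$K_n(f,\mathbf x):=\frac{\sum_{\mathbf k\in\mathcal K_n}\Big[n^d\int_{R_{\mathbf k,n}}f(\mathbf u)\,d\mathbf u\Big]\Psi_\sigma(n\mathbf x-\mathbf k)}{\sum_{\mathbf k\in\mathcal K_n}\Psi_\sigma(n\mathbf x-\mathbf k)},\qquad \mathbf x\in I,$$ where $R_{\mathbf k,n}:=\prod_{i=1}^d[k_i/n,(k_i+1)/n]$. The modulus of continuity is $\omega(f,\delta):=\sup\{|f(\mathbf x)-f(\mathbf y)|:\mathbf x,\mathbf y\in I,\ \|\mathbf x-\mathbf y\|_2\le\delta\}$, and for $0<\nu\le1$, $Lip(\nu):=\{f\in C(I):\omega(f,\delta)=\mathcal O(\delta^\nu)\text{ as }\delta\to0^+\}$. *)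

theory Defs
  imports "HOL-Analysis.Analysis" "HOL-Library.Landau_Symbols"
begin

definition phi_sigma :: "(real \<Rightarrow> real) \<Rightarrow> real \<Rightarrow> real" where
  "phi_sigma \<sigma> x = (\<sigma> (x + 1) - \<sigma> (x - 1)) / 2"

definition Psi_sigma :: "(real \<Rightarrow> real) \<Rightarrow> real ^ 'n \<Rightarrow> real" where
  "Psi_sigma \<sigma> x = (\<Prod>i\<in>UNIV. phi_sigma \<sigma> (x $ i))"

definition M_beta :: "real \<Rightarrow> (real \<Rightarrow> real) \<Rightarrow> ennreal" where
  "M_beta \<beta> g = (SUP x. (\<Sum>\<^sub>\<infinity> k\<in>(UNIV::int set).
       ennreal (\<bar>g (x - real_of_int k)\<bar> *
         (if \<beta> = 0 then 1 else \<bar>real_of_int k - x\<bar> powr \<beta>))))"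

definition Kset :: "real ^ 'n \<Rightarrow> real ^ 'n \<Rightarrow> nat \<Rightarrow> (int ^ 'n) set" where
  "Kset a b n = {k. \<forall>i. \<lceil>real n * a $ i\<rceil> \<le> k $ i \<and> k $ i \<le> \<lfloor>real n * b $ i\<rfloor> - 1}"

definition Rbox :: "int ^ 'n \<Rightarrow> nat \<Rightarrow> (real ^ 'n) set" where
  "Rbox k n = cbox (\<chi> i. real_of_int (k $ i) / real n) (\<chi> i. (real_of_int (k $ i) + 1) / real n)"

definition kvec :: "int ^ 'n \<Rightarrow> real ^ 'n" where
  "kvec k = (\<chi> i. real_of_int (k $ i))"

definition KNN :: "(real \<Rightarrow> real) \<Rightarrow> real ^ 'n \<Rightarrow> real ^ 'n \<Rightarrow> nat
    \<Rightarrow> (real ^ 'n \<Rightarrow> real) \<Rightarrow> real ^ 'n \<Rightarrow> real" where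
  "KNN \<sigma> a b n f x =
     (\<Sum>k\<in>Kset a b n. (real n ^ CARD('n) * integral (Rbox k n) f)
          * Psi_sigma \<sigma> (real n *\<^sub>R x - kvec k))
     / (\<Sum>k\<in>Kset a b n. Psi_sigma \<sigma> (real n *\<^sub>R x - kvec k))"

definition modcont :: "(real ^ 'n) set \<Rightarrow> (real ^ 'n \<Rightarrow> real) \<Rightarrow> real \<Rightarrow> real" where
  "modcont I f \<delta> = Sup {\<bar>f x - f y\<bar> | x y. x \<in> I \<and> y \<in> I \<and> norm (x - y) \<le> \<delta>}"

definition LipClass :: "(real ^ 'n) set \<Rightarrow> real \<Rightarrow> (real ^ 'n \<Rightarrow> real) set" where
  "LipClass I \<nu> = {f. continuous_on I f \<and>
       (\<lambda>\<delta>. modcont I f \<delta>) \<in> O[at_right 0](\<lambda>\<delta>. \<delta> powr \<nu>)}"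

end

theory Submission
  imports Defs
begin

lemma sum_le_suminf_inj:
  fixes g :: "'a \<Rightarrow> real" and s :: "nat \<Rightarrow> real"
  assumes "finite K" "inj_on e K" "summable s" "\<And>m. s m \<ge> 0"
    "\<And>k. k \<in> K \<Longrightarrow> g k \<le> s (e k)"
  shows "sum g K \<le> suminf s"
proof -
  have "sum g K \<le> sum (\<lambda>k. s (e k)) K" using assms(5) by (rule sum_mono)
  also have "\<dots> = sum s (e ` K)" by (simp add: sum.reindex[OF assms(2)])
  also have "\<dots> \<le> suminf s" using assms by (intro sum_le_suminf) auto
  finally show ?thesis .
qed

lemma series_bound:
  fixes \<alpha> :: real
  assumes "\<alpha> > 1"
  shows "\<exists>Z. \<forall>t (K::int set). finite K \<longrightarrow> (\<Sum>k\<in>K. (\<bar>t - real_of_int k\<bar> + 1) powr (-\<alpha>)) \<le> Z"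
proof -
  define s where "s = (\<lambda>m::nat. (real m + 1) powr (-\<alpha>))"
  have s0: "\<And>m. s m \<ge> 0" by (simp add: s_def)
  have "summable (\<lambda>m::nat. real m powr (-\<alpha>))" using assms by (subst summable_real_powr_iff) auto
  hence sums: "summable s" unfolding s_def
    using summable_Suc_iff[of "\<lambda>m::nat. real m powr (-\<alpha>)"] by (simp add: add.commute)
  show ?thesis
  proof (intro exI allI impI)
    fix t :: real and K :: "int set" assume K: "finite K"
    define K1 where "K1 = {k\<in>K. real_of_int k \<le> t}"
    define K2 where "K2 = {k\<in>K. \<not> real_of_int k \<le> t}"
    have split: "K = K1 \<union> K2" "K1 \<inter> K2 = {}" unfolding K1_def K2_def by auto
    have f1: "finite K1" "finite K2" using K unfolding K1_def K2_def by auto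
    have b1: "(\<Sum>k\<in>K1. (\<bar>t - real_of_int k\<bar> + 1) powr (-\<alpha>)) \<le> suminf s"
    proof (rule sum_le_suminf_inj[OF f1(1) _ sums s0])
      show "inj_on (\<lambda>k. nat \<lfloor>t - real_of_int k\<rfloor>) K1"
      proof (rule inj_onI)
        fix x y assume xy: "x \<in> K1" "y \<in> K1" "nat \<lfloor>t - real_of_int x\<rfloor> = nat \<lfloor>t - real_of_int y\<rfloor>"
        have "\<lfloor>t - real_of_int x\<rfloor> \<ge> 0" "\<lfloor>t - real_of_int y\<rfloor> \<ge> 0" using xy unfolding K1_def by (auto simp: le_floor_iff)
        hence "\<lfloor>t - real_of_int x\<rfloor> = \<lfloor>t - real_of_int y\<rfloor>" using xy(3) by simp
        hence "\<lfloor>t\<rfloor> - x = \<lfloor>t\<rfloor> - y" by (metis floor_diff_of_int)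
        thus "x = y" by simp
      qed
      fix k assume k: "k \<in> K1"
      have fl: "0 \<le> \<lfloor>t - real_of_int k\<rfloor>" using k unfolding K1_def by (auto simp: le_floor_iff)
      have "real (nat \<lfloor>t - real_of_int k\<rfloor>) = real_of_int \<lfloor>t - real_of_int k\<rfloor>" using fl by simp
      also have "\<dots> \<le> t - real_of_int k" by (rule of_int_floor_le)
      finally have "real (nat \<lfloor>t - real_of_int k\<rfloor>) + 1 \<le> \<bar>t - real_of_int k\<bar> + 1"
        by linarith
      thus "(\<bar>t - real_of_int k\<bar> + 1) powr (-\<alpha>) \<le> s (nat \<lfloor>t - real_of_int k\<rfloor>)"
        unfolding s_def using assms by (intro powr_mono2') auto
    qed
    have b2: "(\<Sum>k\<in>K2. (\<bar>t - real_of_int k\<bar> + 1) powr (-\<alpha>)) \<le> suminf s"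
    proof (rule sum_le_suminf_inj[OF f1(2) _ sums s0])
      show "inj_on (\<lambda>k. nat \<lfloor>real_of_int k - t\<rfloor>) K2"
      proof (rule inj_onI)
        fix x y assume xy: "x \<in> K2" "y \<in> K2" "nat \<lfloor>real_of_int x - t\<rfloor> = nat \<lfloor>real_of_int y - t\<rfloor>"
        have "0 \<le> real_of_int x - t" "0 \<le> real_of_int y - t" using xy unfolding K2_def by auto
        hence "\<lfloor>real_of_int x - t\<rfloor> \<ge> 0" "\<lfloor>real_of_int y - t\<rfloor> \<ge> 0" by (simp_all only: zero_le_floor)
        hence "\<lfloor>real_of_int x - t\<rfloor> = \<lfloor>real_of_int y - t\<rfloor>" using xy(3) by (metis nat_eq_iff2)
        hence "x + \<lfloor>- t\<rfloor> = y + \<lfloor>- t\<rfloor>" by (metis floor_add_int add.commute diff_conv_add_uminus)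
        thus "x = y" by simp
      qed
      fix k assume k: "k \<in> K2"
      have fl: "0 \<le> \<lfloor>real_of_int k - t\<rfloor>" using k unfolding K2_def by (auto simp: le_floor_iff)
      have "real (nat \<lfloor>real_of_int k - t\<rfloor>) = real_of_int \<lfloor>real_of_int k - t\<rfloor>" using fl by simp
      also have "\<dots> \<le> real_of_int k - t" by (rule of_int_floor_le)
      finally have "real (nat \<lfloor>real_of_int k - t\<rfloor>) + 1 \<le> \<bar>t - real_of_int k\<bar> + 1"
        by linarith
      thus "(\<bar>t - real_of_int k\<bar> + 1) powr (-\<alpha>) \<le> s (nat \<lfloor>real_of_int k - t\<rfloor>)"
        unfolding s_def using assms by (intro powr_mono2') auto
    qed
    have "(\<Sum>k\<in>K. (\<bar>t - real_of_int k\<bar> + 1) powr (-\<alpha>)) =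
       (\<Sum>k\<in>K1. (\<bar>t - real_of_int k\<bar> + 1) powr (-\<alpha>)) + (\<Sum>k\<in>K2. (\<bar>t - real_of_int k\<bar> + 1) powr (-\<alpha>))"
      using split f1 by (metis sum.union_disjoint)
    also have "\<dots> \<le> 2 * suminf s" using b1 b2 by simp
    finally show "(\<Sum>k\<in>K. (\<bar>t - real_of_int k\<bar> + 1) powr (-\<alpha>)) \<le> 2 * suminf s" .
  qed
qed

lemma sum_prod_box:
  fixes g :: "'n::finite \<Rightarrow> int \<Rightarrow> real" and S :: "'n \<Rightarrow> int set"
  assumes "\<And>i. finite (S i)"
  shows "(\<Sum>k\<in>{k::int^'n. \<forall>i. k$i \<in> S i}. \<Prod>i\<in>UNIV. g i (k$i)) = (\<Prod>i\<in>UNIV. \<Sum>t\<in>S i. g i t)"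
proof -
  have "(\<Prod>i\<in>UNIV. \<Sum>t\<in>S i. g i t) = (\<Sum>h\<in>PiE UNIV S. \<Prod>i\<in>UNIV. g i (h i))"
    using assms by (intro prod_sum_PiE) auto
  also have "\<dots> = (\<Sum>k\<in>{k::int^'n. \<forall>i. k$i \<in> S i}. \<Prod>i\<in>UNIV. g i (k$i))"
  proof (rule sum.reindex_bij_betw[symmetric])
    show "bij_betw vec_nth {k::int^'n. \<forall>i. k$i \<in> S i} (PiE UNIV S)"
    proof (rule bij_betwI[where g = vec_lambda])
      show "vec_nth \<in> {k::int^'n. \<forall>i. k$i \<in> S i} \<rightarrow> PiE UNIV S" by auto
      show "vec_lambda \<in> PiE UNIV S \<rightarrow> {k::int^'n. \<forall>i. k$i \<in> S i}" by (auto simp: PiE_def Pi_def)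
    qed auto
  qed
  finally show ?thesis by simp
qed

locale sig =
  fixes \<sigma> :: "real \<Rightarrow> real" and \<alpha> :: real
  assumes sig_mono: "mono \<sigma>"
    and sig_bot: "(\<sigma> \<longlongrightarrow> 0) at_bot"
    and sig_top: "(\<sigma> \<longlongrightarrow> 1) at_top"
    and sig_odd: "\<And>x. \<sigma> (- x) - 1/2 = - (\<sigma> x - 1/2)"
    and sig_diff: "\<And>x. \<sigma> differentiable (at x)"
    and sig_concave: "concave_on {0..} \<sigma>"
    and alpha: "\<alpha> > 1"
    and sig_decay: "\<sigma> \<in> O[at_bot](\<lambda>x. \<bar>x\<bar> powr (-1 - \<alpha>))"
    and sig1: "\<sigma> 1 < 1"
begin

abbreviation "\<phi> \<equiv> phi_sigma \<sigma>"

lemma sig_le1: "\<sigma> x \<le> 1"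
proof (rule tendsto_lowerbound[OF sig_top])
  show "\<forall>\<^sub>F y in at_top. \<sigma> x \<le> \<sigma> y"
    using eventually_ge_at_top[of x] by eventually_elim (use sig_mono in \<open>auto simp: mono_def\<close>)
qed simp

lemma sig_ge0: "0 \<le> \<sigma> x"
proof (rule tendsto_upperbound[OF sig_bot])
  show "\<forall>\<^sub>F y in at_bot. \<sigma> y \<le> \<sigma> x"
    using eventually_le_at_bot[of x] by eventually_elim (use sig_mono in \<open>auto simp: mono_def\<close>)
qed simp

lemma sig_neg: "\<sigma> (- x) = 1 - \<sigma> x"
  using sig_odd[of x] by simp

lemma phi_nonneg: "0 \<le> \<phi> s"
  using sig_mono unfolding phi_sigma_def mono_def by auto

lemma phi_le: "\<phi> s \<le> 1/2"
  using sig_le1[of "s+1"] sig_ge0[of "s-1"] unfolding phi_sigma_def by auto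

lemma phi_even: "\<phi> (- s) = \<phi> s"
proof -
  have "\<sigma> (- s + 1) = 1 - \<sigma> (s - 1)" using sig_neg[of "s - 1"] by simp
  moreover have "\<sigma> (- s - 1) = 1 - \<sigma> (s + 1)" using sig_neg[of "s + 1"] by simp
  ultimately show ?thesis unfolding phi_sigma_def by simp
qed

lemma phi_abs: "\<phi> \<bar>s\<bar> = \<phi> s"
  by (cases "s \<ge> 0") (auto simp: phi_even)

lemma sig_cont: "isCont \<sigma> x"
  using sig_diff differentiable_imp_continuous_within by blast

lemma phi_cont: "isCont \<phi> x"
  unfolding phi_sigma_def[abs_def]
  by (intro continuous_intros isCont_o2[OF _ sig_cont]) auto

lemma phi_differentiable: "\<phi> differentiable (at x)"
  unfolding phi_sigma_def[abs_def]
  by (intro derivative_intros differentiable_compose[OF sig_diff]) auto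

lemma phi_deriv: "(\<phi> has_real_derivative deriv \<phi> x) (at x)"
  using phi_differentiable DERIV_deriv_iff_real_differentiable by blast

lemma sig_strict:
  assumes "0 \<le> u" "u \<le> 1" "u < v"
  shows "\<sigma> u < \<sigma> v"
proof (rule ccontr)
  assume "\<not> \<sigma> u < \<sigma> v"
  hence eq: "\<sigma> v = \<sigma> u" using sig_mono assms unfolding mono_def
    by (metis less_imp_le order_antisym_conv not_less)
  have le: "\<sigma> w \<le> \<sigma> u" if "w > v" for w
  proof -
    have cc: "concave_on {u..w} \<sigma>" 
    proof -
      have sub: "{u..w} \<subseteq> {0..}" using assms by auto
      show ?thesis unfolding concave_on_def
        by (rule convex_on_subset[OF sig_concave[unfolded concave_on_def] sub]) (rule convex_real_interval)
    qed
    have "\<sigma> v \<ge> (\<sigma> w - \<sigma> u) / (w - u) * (v - u) + \<sigma> u"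
      using concave_onD_Icc'[OF cc, of v] assms that by auto
    hence "(\<sigma> w - \<sigma> u) / (w - u) * (v - u) \<le> 0" using eq by simp
    moreover have "w - u > 0" "v - u > 0" using assms that by auto
    ultimately have "\<sigma> w - \<sigma> u \<le> 0"
      by (smt (verit, ccfv_SIG) divide_pos_pos mult_pos_pos)
    thus ?thesis by simp
  qed
  have "(\<sigma> 1 + 1)/2 < 1" using sig1 by simp
  from order_tendstoD(1)[OF sig_top this]
  have "\<forall>\<^sub>F w in at_top. (\<sigma> 1 + 1)/2 < \<sigma> w" .
  then obtain N where N: "\<And>w. w \<ge> N \<Longrightarrow> (\<sigma> 1 + 1)/2 < \<sigma> w"
    unfolding eventually_at_top_linorder by blast
  have "\<sigma> (max N (v+1)) \<le> \<sigma> u" by (rule le) auto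
  moreover have "\<sigma> u \<le> \<sigma> 1" using sig_mono assms unfolding mono_def by auto
  moreover have "(\<sigma> 1 + 1)/2 < \<sigma> (max N (v+1))" by (rule N) auto
  ultimately show False using sig1 by simp
qed

lemma phi_pos:
  assumes "\<bar>s\<bar> \<le> 2"
  shows "\<phi> s > 0"
proof -
  have "\<phi> \<bar>s\<bar> > 0"
  proof (cases "\<bar>s\<bar> \<ge> 1")
    case True
    hence "\<sigma> (\<bar>s\<bar> - 1) < \<sigma> (\<bar>s\<bar> + 1)" using assms by (intro sig_strict) auto
    thus ?thesis unfolding phi_sigma_def by simp
  next
    case False
    have "\<sigma> (\<bar>s\<bar> - 1) \<le> \<sigma> 0" using sig_mono False unfolding mono_def by auto
    also have "\<sigma> 0 < \<sigma> (\<bar>s\<bar> + 1)" by (intro sig_strict) auto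
    finally show ?thesis unfolding phi_sigma_def by simp
  qed
  thus ?thesis by (simp add: phi_abs)
qed

lemma phi_lower: "\<exists>c0>0. \<forall>s. \<bar>s\<bar> \<le> 2 \<longrightarrow> c0 \<le> \<phi> s"
proof -
  have "continuous_on {-2..2} \<phi>" using phi_cont by (simp add: continuous_at_imp_continuous_on)
  then obtain s0 where s0: "s0 \<in> {-2..2}" "\<And>s. s \<in> {-2..2} \<Longrightarrow> \<phi> s0 \<le> \<phi> s"
    using continuous_attains_inf[of "{-2..2::real}" \<phi>] by auto
  have "\<phi> s0 > 0" using s0(1) by (intro phi_pos) auto
  thus ?thesis using s0(2) by (intro exI[of _ "\<phi> s0"]) (auto simp: abs_le_iff)
qed

end

context sig begin

lemma phi_decay: "\<exists>c\<ge>0. \<forall>s. \<phi> s * (1 + \<bar>s\<bar>) \<le> c * (\<bar>s\<bar> + 1) powr (-\<alpha>)"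
proof -
  obtain c where c: "c > 0" "\<forall>\<^sub>F x in at_bot. norm (\<sigma> x) \<le> c * norm (\<bar>x\<bar> powr (-1 - \<alpha>))"
    using sig_decay by (elim landau_o.bigE)
  then obtain N0 where N0: "\<And>x. x \<le> N0 \<Longrightarrow> \<bar>\<sigma> x\<bar> \<le> c * \<bar>x\<bar> powr (-1 - \<alpha>)"
    unfolding eventually_at_bot_linorder by auto
  define N where "N = min N0 (-1)"
  have N: "N \<le> -1" "\<And>x. x \<le> N \<Longrightarrow> \<sigma> x \<le> c * \<bar>x\<bar> powr (-1 - \<alpha>)"
    using N0 unfolding N_def by fastforce+
  define L where "L = 1 - N"
  have L: "L \<ge> 2" using N unfolding L_def by simp
  define c1 where "c1 = c / 2 * 3 powr (1 + \<alpha>)"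
  define c2 where "c2 = (1 + L) / 2 * (L + 1) powr \<alpha>"
  have big: "\<phi> t * (1 + t) \<le> c1 * (t + 1) powr (-\<alpha>)" if t: "t \<ge> L" for t
  proof -
    have e1: "\<sigma> (1 - t) = 1 - \<sigma> (t - 1)" using sig_neg[of "t - 1"] by simp
    have "\<sigma> (-1 - t) = \<sigma> (-(t + 1))" by (simp add: algebra_simps)
    hence e2: "\<sigma> (-1 - t) = 1 - \<sigma> (t + 1)" using sig_neg[of "t + 1"] by simp
    have "\<phi> t = (\<sigma> (1 - t) - \<sigma> (-1 - t)) / 2"
      unfolding phi_sigma_def e1 e2 by simp
    also have "\<dots> \<le> \<sigma> (1 - t) / 2" using sig_ge0[of "-1-t"] by simp
    finally have p1: "\<phi> t \<le> \<sigma> (1 - t) / 2" .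
    have "\<sigma> (1 - t) \<le> c * \<bar>1 - t\<bar> powr (-1 - \<alpha>)" using t unfolding L_def by (intro N(2)) auto
    moreover have "\<bar>1 - t\<bar> = t - 1" using t L by simp
    ultimately have p2: "\<sigma> (1 - t) \<le> c * (t - 1) powr (-1 - \<alpha>)" by simp
    have p3: "(t - 1) powr (-1 - \<alpha>) \<le> ((t + 1) / 3) powr (-1 - \<alpha>)"
      using t L alpha by (intro powr_mono2') auto
    have p4: "((t + 1) / 3) powr (-1 - \<alpha>) = (t + 1) powr (-1 - \<alpha>) / 3 powr (-1 - \<alpha>)"
      using t L by (intro powr_divide)
    have p5: "3 powr (-1 - \<alpha>) = inverse (3 powr (1 + \<alpha>))" using powr_minus[of 3 "1+\<alpha>"] by simp
    have p6: "(t - 1) powr (-1 - \<alpha>) \<le> (t + 1) powr (-1 - \<alpha>) * 3 powr (1 + \<alpha>)"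
      using p3 unfolding p4 p5 by (simp add: divide_inverse)
    have "\<phi> t \<le> c / 2 * ((t + 1) powr (-1 - \<alpha>) * 3 powr (1 + \<alpha>))"
      using p1 p2 mult_left_mono[OF p6 less_imp_le[OF c(1)]] by linarith
    hence pp: "\<phi> t \<le> c / 2 * 3 powr (1 + \<alpha>) * (t + 1) powr (-1 - \<alpha>)" by (simp add: mult_ac)
    have "\<phi> t * (1 + t) \<le> c1 * ((t + 1) powr (-1 - \<alpha>) * (t + 1))"
      using mult_right_mono[OF pp, of "1+t"] t L unfolding c1_def by (simp add: mult_ac add.commute)
    also have "(t + 1) powr (-1 - \<alpha>) * (t + 1) = (t + 1) powr (-\<alpha>)"
    proof -
      have "(t + 1) powr (-\<alpha>) = (t + 1) powr ((-1 - \<alpha>) + 1)" by simp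
      also have "\<dots> = (t + 1) powr (-1 - \<alpha>) * (t + 1)" using t L by (subst powr_add) simp
      finally show ?thesis by simp
    qed
    finally show ?thesis .
  qed
  have small: "\<phi> t * (1 + t) \<le> c2 * (t + 1) powr (-\<alpha>)" if t: "0 \<le> t" "t \<le> L" for t
  proof -
    have "\<phi> t * (1 + t) \<le> 1/2 * (1 + t)" using phi_le[of t] t by (intro mult_right_mono) auto
    also have "\<dots> \<le> (1 + L) / 2" using t by simp
    also have "\<dots> = (1 + L) / 2 * ((L + 1) powr \<alpha> * (L + 1) powr (-\<alpha>))"
      using L by (simp add: powr_minus)
    also have "\<dots> \<le> (1 + L) / 2 * ((L + 1) powr \<alpha> * (t + 1) powr (-\<alpha>))"
      using t L alpha by (intro mult_left_mono powr_mono2') auto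
    finally show ?thesis unfolding c2_def by (simp add: mult_ac)
  qed
  define c3 where "c3 = max c1 c2"
  have "c2 \<ge> 0" unfolding c2_def using L by simp
  hence c3: "c3 \<ge> 0" unfolding c3_def by linarith
  show ?thesis
  proof (rule exI[of _ c3], intro conjI allI)
    show "c3 \<ge> 0" by (rule c3)
    fix s
    have "\<phi> s * (1 + \<bar>s\<bar>) = \<phi> \<bar>s\<bar> * (1 + \<bar>s\<bar>)" by (simp only: phi_abs)
    also have "\<dots> \<le> c3 * (\<bar>s\<bar> + 1) powr (-\<alpha>)"
    proof (cases "\<bar>s\<bar> \<ge> L")
      case True
      have "c1 * (\<bar>s\<bar> + 1) powr (-\<alpha>) \<le> c3 * (\<bar>s\<bar> + 1) powr (-\<alpha>)"
        unfolding c3_def by (intro mult_right_mono) auto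
      thus ?thesis using big[OF True] by linarith
    next
      case False
      have "c2 * (\<bar>s\<bar> + 1) powr (-\<alpha>) \<le> c3 * (\<bar>s\<bar> + 1) powr (-\<alpha>)"
        unfolding c3_def by (intro mult_right_mono) auto
      thus ?thesis using small[of "\<bar>s\<bar>"] False by linarith
    qed
    finally show "\<phi> s * (1 + \<bar>s\<bar>) \<le> c3 * (\<bar>s\<bar> + 1) powr (-\<alpha>)" .
  qed
qed

lemma phi_sum: "\<exists>C. \<forall>t (K::int set). finite K \<longrightarrow>
   (\<Sum>k\<in>K. \<phi> (t - real_of_int k) * (1 + \<bar>t - real_of_int k\<bar>)) \<le> C"
proof -
  obtain c where c: "c \<ge> 0" "\<And>s. \<phi> s * (1 + \<bar>s\<bar>) \<le> c * (\<bar>s\<bar> + 1) powr (-\<alpha>)"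
    using phi_decay by blast
  obtain Z where Z: "\<And>t K. finite (K::int set) \<Longrightarrow> (\<Sum>k\<in>K. (\<bar>t - real_of_int k\<bar> + 1) powr (-\<alpha>)) \<le> Z"
    using series_bound[OF alpha] by blast
  show ?thesis
  proof (intro exI allI impI)
    fix t and K :: "int set" assume K: "finite K"
    have "(\<Sum>k\<in>K. \<phi> (t - real_of_int k) * (1 + \<bar>t - real_of_int k\<bar>))
        \<le> (\<Sum>k\<in>K. c * (\<bar>t - real_of_int k\<bar> + 1) powr (-\<alpha>))"
      by (intro sum_mono c(2))
    also have "\<dots> = c * (\<Sum>k\<in>K. (\<bar>t - real_of_int k\<bar> + 1) powr (-\<alpha>))" by (simp add: sum_distrib_left)
    also have "\<dots> \<le> c * Z" using Z[OF K] c(1) by (intro mult_left_mono)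
    finally show "(\<Sum>k\<in>K. \<phi> (t - real_of_int k) * (1 + \<bar>t - real_of_int k\<bar>)) \<le> c * Z" .
  qed
qed

lemma M1_finite:
  fixes g :: "real \<Rightarrow> real"
  assumes "M_beta 1 g < top"
  shows "\<exists>M. \<forall>x (K::int set). finite K \<longrightarrow> (\<Sum>k\<in>K. \<bar>g (x - real_of_int k)\<bar> * \<bar>real_of_int k - x\<bar>) \<le> M"
proof (intro exI allI impI)
  fix x and K :: "int set" assume K: "finite K"
  have p1: "\<And>y::real. \<bar>y\<bar> powr 1 = \<bar>y\<bar>" by (case_tac "y = 0") auto
  define h where "h = (\<lambda>k::int. \<bar>g (x - real_of_int k)\<bar> * \<bar>real_of_int k - x\<bar>)"
  have "ennreal (sum h K) = (\<Sum>k\<in>K. ennreal (h k))"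
    unfolding h_def by (rule sum_ennreal[symmetric]) auto
  also have "\<dots> \<le> (\<Sum>\<^sub>\<infinity> k\<in>(UNIV::int set). ennreal (h k))"
    by (subst nonneg_infsum_complete) (auto intro!: SUP_upper K)
  also have "\<dots> \<le> M_beta 1 g"
    unfolding M_beta_def h_def p1 by (rule SUP_upper2[of x]) auto
  finally have "ennreal (sum h K) \<le> M_beta 1 g" .
  hence "enn2real (ennreal (sum h K)) \<le> enn2real (M_beta 1 g)"
    using assms by (intro enn2real_mono) auto
  moreover have "sum h K \<ge> 0" unfolding h_def by (intro sum_nonneg) auto
  ultimately show "sum h K \<le> enn2real (M_beta 1 g)" by simp
qed

end

lemma box_prod_bound:
  fixes G :: "'n::finite \<Rightarrow> real \<Rightarrow> real" and S :: "'n \<Rightarrow> int set" and t :: "'n \<Rightarrow> real"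
  assumes "\<And>i. finite (S i)" "\<And>i s. G i s \<ge> 0" "\<And>i. (\<Sum>k\<in>S i. G i (t i - real_of_int k)) \<le> B"
  shows "(\<Sum>k\<in>{k::int^'n. \<forall>i. k$i \<in> S i}. \<Prod>i\<in>UNIV. G i (t i - real_of_int (k$i))) \<le> B ^ CARD('n)"
proof -
  have "(\<Sum>k\<in>{k::int^'n. \<forall>i. k$i \<in> S i}. \<Prod>i\<in>UNIV. G i (t i - real_of_int (k$i)))
      = (\<Prod>i\<in>UNIV. \<Sum>k\<in>S i. G i (t i - real_of_int k))"
    using sum_prod_box[of S "\<lambda>i k. G i (t i - real_of_int k)"] assms(1) by simp
  also have "\<dots> \<le> (\<Prod>i\<in>(UNIV::'n set). B)"
    using assms by (intro prod_mono conjI sum_nonneg) auto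
  also have "\<dots> = B ^ CARD('n)" by simp
  finally show ?thesis .
qed

lemma Kset_eq: "Kset a b n = {k. \<forall>i. k$i \<in> {\<lceil>real n * a$i\<rceil>..\<lfloor>real n * b$i\<rfloor> - 1}}"
  unfolding Kset_def by auto

lemma finite_Kset: fixes a b :: "real^'n::finite" shows "finite (Kset a b n)"
proof -
  have "finite {k::int^'n. \<forall>i. k$i \<in> {\<lceil>real n * a$i\<rceil>..\<lfloor>real n * b$i\<rfloor> - 1}}"
  proof -
    have "{k::int^'n. \<forall>i. k$i \<in> {\<lceil>real n * a$i\<rceil>..\<lfloor>real n * b$i\<rfloor> - 1}}
        = vec_lambda ` PiE UNIV (\<lambda>i. {\<lceil>real n * a$i\<rceil>..\<lfloor>real n * b$i\<rfloor> - 1})"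
    proof (intro set_eqI iffI)
      fix k :: "int^'n" assume "k \<in> {k. \<forall>i. k$i \<in> {\<lceil>real n * a$i\<rceil>..\<lfloor>real n * b$i\<rfloor> - 1}}"
      thus "k \<in> vec_lambda ` PiE UNIV (\<lambda>i. {\<lceil>real n * a$i\<rceil>..\<lfloor>real n * b$i\<rfloor> - 1})"
        by (intro image_eqI[of _ _ "vec_nth k"]) auto
    qed auto
    thus ?thesis by (simp add: finite_PiE)
  qed
  thus ?thesis by (simp add: Kset_eq)
qed

lemma Psi_eq: "Psi_sigma \<sigma> (real n *\<^sub>R x - kvec k) = (\<Prod>i\<in>UNIV. phi_sigma \<sigma> (real n * x$i - real_of_int (k$i)))"
  unfolding Psi_sigma_def kvec_def by simp

context sig begin

lemma Psi_nonneg: "0 \<le> Psi_sigma \<sigma> v"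
  unfolding Psi_sigma_def by (intro prod_nonneg) (auto simp: phi_nonneg)

lemma denom_lower:
  "\<exists>c>0. \<forall>(n::nat) (a::real^'n) b x. (\<forall>i. real n * (b$i - a$i) \<ge> 3) \<longrightarrow> x \<in> cbox a b \<longrightarrow>
     c \<le> (\<Sum>k\<in>Kset a b n. Psi_sigma \<sigma> (real n *\<^sub>R x - kvec k))"
proof -
  obtain c0 where c0: "c0 > 0" "\<And>s. \<bar>s\<bar> \<le> 2 \<Longrightarrow> c0 \<le> \<phi> s" using phi_lower by blast
  show ?thesis
  proof (intro exI[of _ "c0 ^ CARD('n)"] conjI allI impI)
    show "c0 ^ CARD('n) > 0" using c0 by simp
    fix n :: nat and a b x :: "real^'n"
    assume ab: "\<forall>i. real n * (b$i - a$i) \<ge> 3" and x: "x \<in> cbox a b"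
    define k where "k = (\<chi> i. min (max \<lfloor>real n * x$i\<rfloor> \<lceil>real n * a$i\<rceil>) (\<lfloor>real n * b$i\<rfloor> - 1))"
    have xi: "a$i \<le> x$i" "x$i \<le> b$i" for i using x by (auto simp: mem_box_cart)
    have kk: "\<lceil>real n * a$i\<rceil> \<le> k$i \<and> k$i \<le> \<lfloor>real n * b$i\<rfloor> - 1 \<and> \<bar>real n * x$i - real_of_int (k$i)\<bar> \<le> 2" for i
    proof -
      have n1: "real n * a$i \<le> real n * x$i" "real n * x$i \<le> real n * b$i"
        using xi[of i] by (auto intro: mult_left_mono)
      have h: "real n * b$i - real n * a$i \<ge> 3" using ab[rule_format, of i] by (simp add: algebra_simps)
      have f1: "real_of_int \<lfloor>real n * x$i\<rfloor> \<le> real n * x$i" "real n * x$i < real_of_int \<lfloor>real n * x$i\<rfloor> + 1"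
        by linarith+
      have f2: "real_of_int \<lfloor>real n * b$i\<rfloor> \<le> real n * b$i" "real n * b$i < real_of_int \<lfloor>real n * b$i\<rfloor> + 1"
        by linarith+
      have f3: "real n * a$i \<le> real_of_int \<lceil>real n * a$i\<rceil>" "real_of_int \<lceil>real n * a$i\<rceil> < real n * a$i + 1"
        by linarith+
      have "\<lceil>real n * a$i\<rceil> \<le> \<lfloor>real n * b$i\<rfloor> - 1"
      proof -
        have "real_of_int \<lceil>real n * a$i\<rceil> < real_of_int \<lfloor>real n * b$i\<rfloor>" using f2 f3 h by linarith
        thus ?thesis by linarith
      qed
      moreover have "k$i = min (max \<lfloor>real n * x$i\<rfloor> \<lceil>real n * a$i\<rceil>) (\<lfloor>real n * b$i\<rfloor> - 1)"
        unfolding k_def by simp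
      ultimately show ?thesis using f1 f2 f3 n1 h
        by (auto simp: min_def max_def abs_if) linarith+
    qed
    have kin: "k \<in> Kset a b n" unfolding Kset_def using kk by auto
    have "c0 ^ CARD('n) = (\<Prod>i\<in>(UNIV::'n set). c0)" by simp
    also have "\<dots> \<le> (\<Prod>i\<in>UNIV. \<phi> (real n * x$i - real_of_int (k$i)))"
      using c0 kk by (intro prod_mono) auto
    also have "\<dots> = Psi_sigma \<sigma> (real n *\<^sub>R x - kvec k)" by (simp add: Psi_eq)
    also have "\<dots> \<le> (\<Sum>k\<in>Kset a b n. Psi_sigma \<sigma> (real n *\<^sub>R x - kvec k))"
      using kin finite_Kset by (intro member_le_sum Psi_nonneg)
    finally show "c0 ^ CARD('n) \<le> (\<Sum>k\<in>Kset a b n. Psi_sigma \<sigma> (real n *\<^sub>R x - kvec k))" .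
  qed
qed

end

locale sig2 = sig +
  assumes sig_diff2: "\<And>x. deriv \<sigma> differentiable (at x)"
    and M1: "M_beta 1 (deriv (phi_sigma \<sigma>)) < top"
begin

lemma sig_deriv: "(\<sigma> has_real_derivative deriv \<sigma> x) (at x)"
  using sig_diff DERIV_deriv_iff_real_differentiable by blast

lemma dphi_eq: "deriv \<phi> x = (deriv \<sigma> (x + 1) - deriv \<sigma> (x - 1)) / 2"
proof -
  have d1: "((\<lambda>x. \<sigma> (x + 1)) has_real_derivative deriv \<sigma> (x + 1)) (at x)"
  proof -
    have "((\<lambda>x. x + 1) has_real_derivative 1) (at x)" by (auto intro!: derivative_eq_intros)
    from DERIV_chain2[OF sig_deriv this] show ?thesis by simp
  qed
  have d2: "((\<lambda>x. \<sigma> (x - 1)) has_real_derivative deriv \<sigma> (x - 1)) (at x)"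
  proof -
    have "((\<lambda>x. x - 1) has_real_derivative 1) (at x)" by (auto intro!: derivative_eq_intros)
    from DERIV_chain2[OF sig_deriv this] show ?thesis by simp
  qed
  have "(\<phi> has_real_derivative (deriv \<sigma> (x + 1) - deriv \<sigma> (x - 1)) / 2) (at x)"
    unfolding phi_sigma_def[abs_def] by (intro DERIV_cdivide DERIV_diff d1 d2)
  thus ?thesis by (rule DERIV_imp_deriv)
qed

lemma dsig_cont: "isCont (deriv \<sigma>) x"
  using sig_diff2 differentiable_imp_continuous_within by blast

lemma dphi_cont: "isCont (deriv \<phi>) x"
proof -
  have "isCont (\<lambda>x. (deriv \<sigma> (x + 1) - deriv \<sigma> (x - 1)) / 2) x"
    by (intro continuous_intros isCont_o2[OF _ dsig_cont]) auto
  thus ?thesis unfolding dphi_eq[abs_def] .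
qed

lemma dphi_sum: "\<exists>C. \<forall>t (K::int set). finite K \<longrightarrow>
   (\<Sum>k\<in>K. \<bar>deriv \<phi> (t - real_of_int k)\<bar> * (1 + \<bar>t - real_of_int k\<bar>)) \<le> C"
proof -
  obtain Mr where Mr: "\<And>x K. finite (K::int set) \<Longrightarrow>
      (\<Sum>k\<in>K. \<bar>deriv \<phi> (x - real_of_int k)\<bar> * \<bar>real_of_int k - x\<bar>) \<le> Mr"
    using M1_finite[OF M1] by blast
  obtain Z where Z: "\<And>t K. finite (K::int set) \<Longrightarrow> (\<Sum>k\<in>K. (\<bar>t - real_of_int k\<bar> + 1) powr (-\<alpha>)) \<le> Z"
    using series_bound[OF alpha] by blast
  have "continuous_on {-1..1} (\<lambda>s. \<bar>deriv \<phi> s\<bar>)"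
    using dphi_cont by (intro continuous_intros) (simp add: continuous_at_imp_continuous_on)
  then obtain s0 where s0': "\<forall>s\<in>{-1..1}. \<bar>deriv \<phi> s\<bar> \<le> \<bar>deriv \<phi> s0\<bar>"
    using continuous_attains_sup[of "{-1..1::real}" "\<lambda>s. \<bar>deriv \<phi> s\<bar>"] by auto
  hence s0: "\<And>s. s \<in> {-1..1} \<Longrightarrow> \<bar>deriv \<phi> s\<bar> \<le> \<bar>deriv \<phi> s0\<bar>" by blast
  define B where "B = \<bar>deriv \<phi> s0\<bar>"
  have B0: "B \<ge> 0" unfolding B_def by simp
  have pt: "\<bar>deriv \<phi> s\<bar> * (1 + \<bar>s\<bar>) \<le> 2 * (\<bar>deriv \<phi> s\<bar> * \<bar>s\<bar>) + 2 * B * 2 powr \<alpha> * (\<bar>s\<bar> + 1) powr (-\<alpha>)" for s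
  proof (cases "\<bar>s\<bar> \<ge> 1")
    case True
    have "\<bar>deriv \<phi> s\<bar> * (1 + \<bar>s\<bar>) \<le> \<bar>deriv \<phi> s\<bar> * (2 * \<bar>s\<bar>)"
      using True by (intro mult_left_mono) auto
    moreover have "0 \<le> 2 * B * 2 powr \<alpha> * (\<bar>s\<bar> + 1) powr (-\<alpha>)" using B0 by simp
    ultimately show ?thesis by (simp add: mult_ac)
  next
    case False
    have b: "\<bar>deriv \<phi> s\<bar> \<le> B" unfolding B_def using False by (intro s0) auto
    have "\<bar>deriv \<phi> s\<bar> * (1 + \<bar>s\<bar>) \<le> B * 2"
      using False b B0 by (intro mult_mono) auto
    also have "B * 2 = 2 * B * (2 powr \<alpha> * 2 powr (-\<alpha>))" by (simp add: powr_minus)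
    also have "\<dots> \<le> 2 * B * (2 powr \<alpha> * (\<bar>s\<bar> + 1) powr (-\<alpha>))"
      using False B0 alpha by (intro mult_left_mono powr_mono2') auto
    finally have "\<bar>deriv \<phi> s\<bar> * (1 + \<bar>s\<bar>) \<le> 2 * B * 2 powr \<alpha> * (\<bar>s\<bar> + 1) powr (-\<alpha>)"
      by (simp add: mult_ac)
    moreover have "0 \<le> 2 * (\<bar>deriv \<phi> s\<bar> * \<bar>s\<bar>)" by simp
    ultimately show ?thesis by linarith
  qed
  show ?thesis
  proof (intro exI allI impI)
    fix t and K :: "int set" assume K: "finite K"
    have "(\<Sum>k\<in>K. \<bar>deriv \<phi> (t - real_of_int k)\<bar> * (1 + \<bar>t - real_of_int k\<bar>))
      \<le> (\<Sum>k\<in>K. 2 * (\<bar>deriv \<phi> (t - real_of_int k)\<bar> * \<bar>real_of_int k - t\<bar>)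
             + 2 * B * 2 powr \<alpha> * (\<bar>t - real_of_int k\<bar> + 1) powr (-\<alpha>))"
      using pt by (intro sum_mono) (simp add: abs_minus_commute)
    also have "\<dots> = 2 * (\<Sum>k\<in>K. \<bar>deriv \<phi> (t - real_of_int k)\<bar> * \<bar>real_of_int k - t\<bar>)
        + 2 * B * 2 powr \<alpha> * (\<Sum>k\<in>K. (\<bar>t - real_of_int k\<bar> + 1) powr (-\<alpha>))"
      by (simp add: sum.distrib sum_distrib_left)
    also have "\<dots> \<le> 2 * Mr + 2 * B * 2 powr \<alpha> * Z"
      using Mr[OF K, of t] Z[OF K, of t] B0 by (intro add_mono mult_left_mono) auto
    finally show "(\<Sum>k\<in>K. \<bar>deriv \<phi> (t - real_of_int k)\<bar> * (1 + \<bar>t - real_of_int k\<bar>))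
       \<le> 2 * Mr + 2 * B * 2 powr \<alpha> * Z" .
  qed
qed

end

locale mcf =
  fixes I :: "(real^'n::finite) set" and f :: "real^'n \<Rightarrow> real"
  assumes I_compact: "compact I" and I_convex: "convex I" and I_ne: "I \<noteq> {}"
    and f_cont: "continuous_on I f"
begin

abbreviation "W \<equiv> modcont I f"

lemma f_bdd: "\<exists>B\<ge>0. \<forall>x\<in>I. \<bar>f x\<bar> \<le> B"
proof -
  have "bounded (f ` I)" using compact_continuous_image[OF f_cont I_compact] by (rule compact_imp_bounded)
  then obtain B where "\<forall>y\<in>f ` I. norm y \<le> B" by (auto simp: bounded_iff)
  hence "\<forall>x\<in>I. \<bar>f x\<bar> \<le> max B 0" by fastforce
  thus ?thesis by (intro exI[of _ "max B 0"]) auto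
qed

lemma mc_bdd_above: "bdd_above {\<bar>f x - f y\<bar> | x y. x \<in> I \<and> y \<in> I \<and> norm (x - y) \<le> \<delta>}"
proof -
  obtain B where B: "\<And>x. x \<in> I \<Longrightarrow> \<bar>f x\<bar> \<le> B" using f_bdd by blast
  show ?thesis
  proof (rule bdd_aboveI[of _ "2 * B"])
    fix r assume "r \<in> {\<bar>f x - f y\<bar> | x y. x \<in> I \<and> y \<in> I \<and> norm (x - y) \<le> \<delta>}"
    then obtain x y where "r = \<bar>f x - f y\<bar>" "x \<in> I" "y \<in> I" by blast
    thus "r \<le> 2 * B" using B[of x] B[of y] by linarith
  qed
qed

lemma mc_ge: "x \<in> I \<Longrightarrow> y \<in> I \<Longrightarrow> norm (x - y) \<le> \<delta> \<Longrightarrow> \<bar>f x - f y\<bar> \<le> W \<delta>"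
  unfolding modcont_def by (rule cSup_upper[OF _ mc_bdd_above]) blast

lemma mc_le:
  assumes "\<delta> \<ge> 0" "\<And>x y. x \<in> I \<Longrightarrow> y \<in> I \<Longrightarrow> norm (x - y) \<le> \<delta> \<Longrightarrow> \<bar>f x - f y\<bar> \<le> M"
  shows "W \<delta> \<le> M"
  unfolding modcont_def
proof (rule cSup_least)
  obtain x where "x \<in> I" using I_ne by blast
  thus "{\<bar>f x - f y\<bar> | x y. x \<in> I \<and> y \<in> I \<and> norm (x - y) \<le> \<delta>} \<noteq> {}" using assms(1) by force
qed (use assms(2) in blast)

lemma mc_nonneg: "\<delta> \<ge> 0 \<Longrightarrow> W \<delta> \<ge> 0"
proof -
  assume d: "\<delta> \<ge> 0"
  obtain x where "x \<in> I" using I_ne by blast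
  hence "\<bar>f x - f x\<bar> \<le> W \<delta>" using d by (intro mc_ge) auto
  thus ?thesis by simp
qed

lemma mc_bound: "\<exists>Wm. \<forall>\<delta>\<ge>0. W \<delta> \<le> Wm"
proof -
  obtain B where B: "\<And>x. x \<in> I \<Longrightarrow> \<bar>f x\<bar> \<le> B" using f_bdd by blast
  have "W \<delta> \<le> 2 * B" if "\<delta> \<ge> 0" for \<delta>
    using that by (rule mc_le) (use B in \<open>smt (verit)\<close>)
  thus ?thesis by blast
qed

lemma mc_scale:
  assumes L: "L \<ge> 0" and d: "\<delta> > 0"
  shows "W (L * \<delta>) \<le> (1 + L) * W \<delta>"
proof (rule mc_le)
  show "L * \<delta> \<ge> 0" using L d by simp
  fix x y assume x: "x \<in> I" and y: "y \<in> I" and xy: "norm (x - y) \<le> L * \<delta>"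
  have W0: "W \<delta> \<ge> 0" using d by (intro mc_nonneg) auto
  define m where "m = nat \<lceil>L\<rceil>"
  show "\<bar>f x - f y\<bar> \<le> (1 + L) * W \<delta>"
  proof (cases "m = 0")
    case True
    hence "L = 0" using L unfolding m_def by linarith
    hence "x = y" using xy by simp
    thus ?thesis using W0 L by simp
  next
    case False
    hence m1: "real m \<ge> 1" by simp
    have mL: "L \<le> real m" "real m \<le> 1 + L" unfolding m_def using L by linarith+
    define p where "p = (\<lambda>j::nat. x + (real j / real m) *\<^sub>R (y - x))"
    have pI: "p j \<in> I" if "j \<le> m" for j
    proof -
      define \<theta> where "\<theta> = real j / real m"
      have t: "0 \<le> \<theta>" "\<theta> \<le> 1" unfolding \<theta>_def using that m1 by (auto simp: divide_le_eq_1)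
      have "p j = (1 - \<theta>) *\<^sub>R x + \<theta> *\<^sub>R y" unfolding p_def \<theta>_def by (simp add: algebra_simps)
      thus ?thesis using convexD[OF I_convex x y, of "1 - \<theta>" \<theta>] t by simp
    qed
    have step: "\<bar>f (p (Suc j)) - f (p j)\<bar> \<le> W \<delta>" if "j < m" for j
    proof (rule mc_ge)
      show "p (Suc j) \<in> I" "p j \<in> I" using pI that by auto
      have "p (Suc j) - p j = (1 / real m) *\<^sub>R (y - x)"
        unfolding p_def by (simp add: algebra_simps add_divide_distrib)
      hence "norm (p (Suc j) - p j) = norm (y - x) / real m" using m1 by simp
      also have "\<dots> \<le> L * \<delta> / real m" using xy m1 by (simp add: norm_minus_commute divide_right_mono)
      also have "\<dots> \<le> \<delta>" using mL m1 d by (simp add: divide_le_eq mult_right_mono mult.commute)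
      finally show "norm (p (Suc j) - p j) \<le> \<delta>" .
    qed
    have "f y - f x = (\<Sum>j<m. f (p (Suc j)) - f (p j))"
      by (subst sum_lessThan_telescope) (use m1 in \<open>simp add: p_def\<close>)
    hence "\<bar>f x - f y\<bar> = \<bar>\<Sum>j<m. f (p (Suc j)) - f (p j)\<bar>" by (simp add: abs_minus_commute)
    also have "\<dots> \<le> (\<Sum>j<m. \<bar>f (p (Suc j)) - f (p j)\<bar>)" by (rule sum_abs)
    also have "\<dots> \<le> (\<Sum>j<m. W \<delta>)" using step by (intro sum_mono) auto
    also have "\<dots> = real m * W \<delta>" by simp
    also have "\<dots> \<le> (1 + L) * W \<delta>" using mL W0 by (intro mult_right_mono) auto
    finally show ?thesis .
  qed
qed

end

context sig begin

lemma deriv_Pi: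
  fixes c e :: "'n::finite \<Rightarrow> real"
  shows "((\<lambda>s. \<Prod>i\<in>UNIV. \<phi> (c i + s * e i)) has_real_derivative
     (\<Sum>i\<in>UNIV. (e i * deriv \<phi> (c i + s * e i)) * (\<Prod>j\<in>UNIV - {i}. \<phi> (c j + s * e j)))) (at s)"
proof -
  have d: "((\<lambda>s. \<phi> (c i + s * e i)) has_real_derivative deriv \<phi> (c i + s * e i) * e i) (at s)" for i
  proof -
    have "((\<lambda>s. c i + s * e i) has_real_derivative e i) (at s)" by (auto intro!: derivative_eq_intros)
    from DERIV_chain2[OF phi_deriv this] show ?thesis .
  qed
  have "((\<lambda>s. \<Prod>i\<in>UNIV. \<phi> (c i + s * e i)) has_derivative
     (\<lambda>t. \<Sum>i\<in>UNIV. (deriv \<phi> (c i + s * e i) * e i * t) * (\<Prod>j\<in>UNIV - {i}. \<phi> (c j + s * e j)))) (at s)"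
    by (rule has_derivative_prod[where f'="\<lambda>i t. (deriv \<phi> (c i + s * e i) * e i) * t"])
       (rule d[unfolded has_field_derivative_def])
  moreover have "(\<lambda>t. \<Sum>i\<in>UNIV. (deriv \<phi> (c i + s * e i) * e i * t) * (\<Prod>j\<in>UNIV - {i}. \<phi> (c j + s * e j)))
     = (*) (\<Sum>i\<in>UNIV. (e i * deriv \<phi> (c i + s * e i)) * (\<Prod>j\<in>UNIV - {i}. \<phi> (c j + s * e j)))"
    by (rule ext) (simp add: sum_distrib_left sum_distrib_right mult_ac)
  ultimately show ?thesis unfolding has_field_derivative_def by simp
qed

end

lemma avg_bound:
  fixes f :: "real^'n::finite \<Rightarrow> real" and lo hi :: "real^'n"
  assumes cont: "continuous_on (cbox lo hi) f" and E: "\<And>u. u \<in> cbox lo hi \<Longrightarrow> \<bar>f u - c\<bar> \<le> E"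
    and ne: "cbox lo hi \<noteq> {}"
  shows "\<bar>integral (cbox lo hi) f - Henstock_Kurzweil_Integration.content (cbox lo hi) * c\<bar> \<le> E * Henstock_Kurzweil_Integration.content (cbox lo hi)"
proof -
  have int: "f integrable_on cbox lo hi" using cont by (rule integrable_continuous)
  have "integral (cbox lo hi) (\<lambda>u. f u - c) = integral (cbox lo hi) f - Henstock_Kurzweil_Integration.content (cbox lo hi) * c"
    using int by (subst integral_diff) auto
  moreover have "norm (integral (cbox lo hi) (\<lambda>u. f u - c)) \<le> E * Henstock_Kurzweil_Integration.content (cbox lo hi)"
  proof (rule has_integral_bound)
    obtain u where "u \<in> cbox lo hi" using ne by blast
    thus "0 \<le> E" using E[of u] by linarith
    show "((\<lambda>u. f u - c) has_integral integral (cbox lo hi) (\<lambda>u. f u - c)) (cbox lo hi)"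
      using int by (intro integrable_integral integrable_diff) auto
  qed (use E in auto)
  ultimately show ?thesis by simp
qed

lemma prod_factor_le:
  fixes g :: "'n::finite \<Rightarrow> real"
  assumes "\<And>j. g j \<ge> 1"
  shows "g i \<le> (\<Prod>j\<in>UNIV. g j)"
proof -
  have "(\<Prod>j\<in>UNIV. g j) = g i * (\<Prod>j\<in>UNIV - {i}. g j)" by (simp add: prod.remove)
  moreover have "(\<Prod>j\<in>UNIV - {i}. g j) \<ge> 1" using assms by (intro prod_ge_1) auto
  moreover have "g i \<ge> 0" using assms[of i] by simp
  ultimately show ?thesis by (metis mult_left_mono mult.right_neutral)
qed

locale mainloc = sig2 \<sigma> \<alpha> + mcf "cbox a b" f
  for \<sigma> \<alpha> and a b :: "real^'n::finite" and f +
  assumes ab: "\<And>i. a$i < b$i"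
begin

lemma Rbox_facts:
  assumes n: "n \<ge> 1" and k: "k \<in> Kset a b n"
  shows "Rbox k n \<subseteq> cbox a b" "Rbox k n \<noteq> {}"
    "Henstock_Kurzweil_Integration.content (Rbox k n) = (1 / real n) ^ CARD('n)"
    "\<And>u j. u \<in> Rbox k n \<Longrightarrow> real_of_int (k$j) \<le> real n * u$j \<and> real n * u$j \<le> real_of_int (k$j) + 1"
proof -
  have n0: "real n > 0" using n by simp
  have kj: "\<lceil>real n * a$j\<rceil> \<le> k$j" "k$j \<le> \<lfloor>real n * b$j\<rfloor> - 1" for j using k unfolding Kset_def by auto
  have lo: "a$j \<le> real_of_int (k$j) / real n" for j
  proof -
    have "real n * a$j \<le> real_of_int (k$j)" using kj(1)[of j] by linarith
    thus ?thesis using n0 by (simp add: field_simps)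
  qed
  have hi: "(real_of_int (k$j) + 1) / real n \<le> b$j" for j
  proof -
    have "real_of_int (k$j) + 1 \<le> real n * b$j" using kj(2)[of j] by linarith
    thus ?thesis using n0 by (simp add: field_simps)
  qed
  have lh: "real_of_int (k$j) / real n \<le> (real_of_int (k$j) + 1) / real n" for j
    using n0 by (simp add: divide_right_mono)
  show "Rbox k n \<subseteq> cbox a b"
  proof
    fix x assume "x \<in> Rbox k n"
    hence "real_of_int (k$j) / real n \<le> x$j \<and> x$j \<le> (real_of_int (k$j) + 1) / real n" for j
      unfolding Rbox_def by (auto simp: mem_box_cart)
    thus "x \<in> cbox a b" unfolding mem_box_cart using lo hi by (meson order_trans)
  qed
  show ne: "Rbox k n \<noteq> {}"
    unfolding Rbox_def interval_eq_empty_cart using lh by (auto simp: not_less)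
  have "Henstock_Kurzweil_Integration.content (Rbox k n)
      = (\<Prod>j\<in>UNIV. (real_of_int (k$j) + 1) / real n - real_of_int (k$j) / real n)"
    using ne unfolding Rbox_def by (subst content_cbox_cart) auto
  also have "\<dots> = (\<Prod>j\<in>(UNIV::'n set). 1 / real n)"
    by (rule prod.cong) (simp_all add: diff_divide_distrib[symmetric])
  finally show "Henstock_Kurzweil_Integration.content (Rbox k n) = (1 / real n) ^ CARD('n)" by simp
  fix u j assume "u \<in> Rbox k n"
  hence "real_of_int (k$j) / real n \<le> u$j" "u$j \<le> (real_of_int (k$j) + 1) / real n"
    unfolding Rbox_def by (auto simp: mem_box_cart)
  thus "real_of_int (k$j) \<le> real n * u$j \<and> real n * u$j \<le> real_of_int (k$j) + 1"
    using n0 by (simp add: field_simps)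
qed

lemma F_bound:
  assumes n: "n \<ge> 1" and k: "k \<in> Kset a b n" and z: "z \<in> cbox a b"
  shows "\<bar>real n ^ CARD('n) * integral (Rbox k n) f - f z\<bar>
     \<le> (1 + real CARD('n)) * W (1 / real n) * (\<Prod>j\<in>UNIV. 1 + \<bar>real n * z$j - real_of_int (k$j)\<bar>)"
proof -
  note R = Rbox_facts[OF n k]
  have n0: "real n > 0" using n by simp
  define Q where "Q = (\<Prod>j\<in>UNIV. 1 + \<bar>real n * z$j - real_of_int (k$j)\<bar>)"
  define d where "d = real CARD('n)"
  have Q1: "Q \<ge> 1" unfolding Q_def by (intro prod_ge_1) auto
  have W0: "W (1 / real n) \<ge> 0" by (intro mc_nonneg) simp
  have Ebound: "\<bar>f u - f z\<bar> \<le> (1 + d) * W (1 / real n) * Q" if u: "u \<in> Rbox k n" for u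
  proof -
    have uI: "u \<in> cbox a b" using R(1) u by auto
    have cj: "\<bar>u$j - z$j\<bar> \<le> Q / real n" for j
    proof -
      have "\<bar>real n * u$j - real n * z$j\<bar> \<le> 1 + \<bar>real n * z$j - real_of_int (k$j)\<bar>"
        using R(4)[OF u, of j] by linarith
      also have "\<dots> \<le> Q" unfolding Q_def by (rule prod_factor_le) auto
      moreover have "\<bar>real n * u$j - real n * z$j\<bar> = real n * \<bar>u$j - z$j\<bar>"
      proof -
        have "real n * u$j - real n * z$j = real n * (u$j - z$j)" by (simp add: algebra_simps)
        thus ?thesis by (simp add: abs_mult)
      qed
      ultimately have "real n * \<bar>u$j - z$j\<bar> \<le> Q" by simp
      thus ?thesis using n0 by (simp add: field_simps)
    qed
    have "norm (u - z) \<le> (\<Sum>j\<in>UNIV. \<bar>(u - z)$j\<bar>)" by (rule norm_le_l1_cart)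
    also have "\<dots> \<le> (\<Sum>j\<in>(UNIV::'n set). Q / real n)" using cj by (intro sum_mono) simp
    also have "\<dots> = (d * Q) * (1 / real n)" unfolding d_def by simp
    finally have "\<bar>f u - f z\<bar> \<le> W ((d * Q) * (1 / real n))" by (intro mc_ge uI z)
    also have "\<dots> \<le> (1 + d * Q) * W (1 / real n)"
      using Q1 n0 unfolding d_def by (intro mc_scale) auto
    also have "\<dots> \<le> (1 + d) * W (1 / real n) * Q"
    proof -
      have "1 + d * Q \<le> (1 + d) * Q" using Q1 by (simp add: algebra_simps)
      hence "(1 + d * Q) * W (1 / real n) \<le> ((1 + d) * Q) * W (1 / real n)" using W0 by (rule mult_right_mono)
      thus ?thesis by (simp add: mult_ac)
    qed
    finally show ?thesis .
  qed
  have cont: "continuous_on (Rbox k n) f" using f_cont R(1) by (rule continuous_on_subset)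
  obtain lo hi where lohi: "Rbox k n = cbox lo hi" unfolding Rbox_def by blast
  have "\<bar>integral (Rbox k n) f - Henstock_Kurzweil_Integration.content (Rbox k n) * f z\<bar>
      \<le> ((1 + d) * W (1 / real n) * Q) * Henstock_Kurzweil_Integration.content (Rbox k n)"
    using avg_bound[of lo hi f "f z" "(1 + d) * W (1 / real n) * Q"] cont Ebound R(2)
    unfolding lohi by blast
  hence "real n ^ CARD('n) * \<bar>integral (Rbox k n) f - Henstock_Kurzweil_Integration.content (Rbox k n) * f z\<bar>
      \<le> real n ^ CARD('n) * (((1 + d) * W (1 / real n) * Q) * Henstock_Kurzweil_Integration.content (Rbox k n))"
    by (intro mult_left_mono) auto
  moreover have "real n ^ CARD('n) * Henstock_Kurzweil_Integration.content (Rbox k n) = 1"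
    unfolding R(3) using n0 by (simp add: power_one_over[symmetric] power_mult_distrib[symmetric])
  ultimately have "\<bar>real n ^ CARD('n) * integral (Rbox k n) f - f z\<bar> \<le> (1 + d) * W (1 / real n) * Q"
  proof -
    let ?N = "real n ^ CARD('n)" and ?c = "Henstock_Kurzweil_Integration.content (Rbox k n)"
      and ?I = "integral (Rbox k n) f" and ?X = "(1 + d) * W (1 / real n) * Q"
    assume a1: "?N * \<bar>?I - ?c * f z\<bar> \<le> ?N * (?X * ?c)" and a2: "?N * ?c = 1"
    have "?N * (?I - ?c * f z) = ?N * ?I - (?N * ?c) * f z" by (simp only: right_diff_distrib mult.assoc)
    hence "?N * ?I - f z = ?N * (?I - ?c * f z)" unfolding a2 by simp
    hence e1: "\<bar>?N * ?I - f z\<bar> = ?N * \<bar>?I - ?c * f z\<bar>" by (simp add: abs_mult)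
    have "?N * (?X * ?c) = ?X * (?N * ?c)" by (simp only: mult.commute mult.left_commute)
    hence e2: "?N * (?X * ?c) = ?X" unfolding a2 by simp
    show ?thesis using e1 e2 a1 by linarith
  qed
  thus ?thesis unfolding Q_def d_def .
qed

end

context sig2 begin

lemma Hp_prod:
  fixes v :: "'n::finite \<Rightarrow> real"
  shows "(\<Prod>j\<in>UNIV. (if j = i then \<bar>deriv \<phi> (v j)\<bar> else \<phi> (v j)))
       = \<bar>deriv \<phi> (v i)\<bar> * (\<Prod>j\<in>UNIV - {i}. \<phi> (v j))"
proof -
  have "(\<Prod>j\<in>UNIV. (if j = i then \<bar>deriv \<phi> (v j)\<bar> else \<phi> (v j)))
     = (if i = i then \<bar>deriv \<phi> (v i)\<bar> else \<phi> (v i)) * (\<Prod>j\<in>UNIV - {i}. (if j = i then \<bar>deriv \<phi> (v j)\<bar> else \<phi> (v j)))"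
    by (rule prod.remove[of "UNIV::'n set" i "\<lambda>j. if j = i then \<bar>deriv \<phi> (v j)\<bar> else \<phi> (v j)"]) auto
  also have "(\<Prod>j\<in>UNIV - {i}. (if j = i then \<bar>deriv \<phi> (v j)\<bar> else \<phi> (v j))) = (\<Prod>j\<in>UNIV - {i}. \<phi> (v j))"
    by (rule prod.cong) auto
  finally show ?thesis by simp
qed

lemma P'_bound:
  fixes v e :: "'n::finite \<Rightarrow> real"
  shows "\<bar>\<Sum>i\<in>UNIV. (e i * deriv \<phi> (v i)) * (\<Prod>j\<in>UNIV - {i}. \<phi> (v j))\<bar>
     \<le> (\<Sum>i\<in>UNIV. \<bar>e i\<bar> * (\<Prod>j\<in>UNIV. (if j = i then \<bar>deriv \<phi> (v j)\<bar> else \<phi> (v j))))"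
proof -
  have "\<bar>\<Sum>i\<in>UNIV. (e i * deriv \<phi> (v i)) * (\<Prod>j\<in>UNIV - {i}. \<phi> (v j))\<bar>
     \<le> (\<Sum>i\<in>UNIV. \<bar>(e i * deriv \<phi> (v i)) * (\<Prod>j\<in>UNIV - {i}. \<phi> (v j))\<bar>)" by (rule sum_abs)
  also have "\<dots> = (\<Sum>i\<in>UNIV. \<bar>e i\<bar> * (\<Prod>j\<in>UNIV. (if j = i then \<bar>deriv \<phi> (v j)\<bar> else \<phi> (v j))))"
  proof (rule sum.cong[OF refl])
    fix i
    have "(\<Prod>j\<in>UNIV - {i}. \<phi> (v j)) \<ge> 0" by (intro prod_nonneg) (auto simp: phi_nonneg)
    thus "\<bar>(e i * deriv \<phi> (v i)) * (\<Prod>j\<in>UNIV - {i}. \<phi> (v j))\<bar>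
        = \<bar>e i\<bar> * (\<Prod>j\<in>UNIV. (if j = i then \<bar>deriv \<phi> (v j)\<bar> else \<phi> (v j)))"
      unfolding Hp_prod by (simp add: abs_mult)
  qed
  finally show ?thesis .
qed

lemma G_split:
  fixes v :: "'n::finite \<Rightarrow> real"
  shows "(\<Prod>j\<in>UNIV. (if j = i then \<bar>deriv \<phi> (v j)\<bar> else \<phi> (v j)) * (1 + \<bar>v j\<bar>))
    = (\<Prod>j\<in>UNIV. (if j = i then \<bar>deriv \<phi> (v j)\<bar> else \<phi> (v j))) * (\<Prod>j\<in>UNIV. 1 + \<bar>v j\<bar>)"
  by (rule prod.distrib)

lemma Hp_le_G:
  fixes v :: "'n::finite \<Rightarrow> real"
  shows "(\<Prod>j\<in>UNIV. (if j = i then \<bar>deriv \<phi> (v j)\<bar> else \<phi> (v j)))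
    \<le> (\<Prod>j\<in>UNIV. (if j = i then \<bar>deriv \<phi> (v j)\<bar> else \<phi> (v j)) * (1 + \<bar>v j\<bar>))"
proof (rule prod_mono)
  fix j :: 'n
  have "0 \<le> (if j = i then \<bar>deriv \<phi> (v j)\<bar> else \<phi> (v j))" by (auto simp: phi_nonneg)
  thus "0 \<le> (if j = i then \<bar>deriv \<phi> (v j)\<bar> else \<phi> (v j)) \<and>
     (if j = i then \<bar>deriv \<phi> (v j)\<bar> else \<phi> (v j)) \<le> (if j = i then \<bar>deriv \<phi> (v j)\<bar> else \<phi> (v j)) * (1 + \<bar>v j\<bar>)"
    by (simp add: mult_le_cancel_left1 )
qed

lemma G_box_bound:
  "\<exists>Cm\<ge>0. \<forall>(n::nat) (a::real^'n::finite) b (t::'n \<Rightarrow> real) i.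
    (\<Sum>k\<in>Kset a b n. \<Prod>j\<in>UNIV. (if j = i then \<bar>deriv \<phi> (t j - real_of_int (k$j))\<bar> else \<phi> (t j - real_of_int (k$j)))
        * (1 + \<bar>t j - real_of_int (k$j)\<bar>)) \<le> Cm ^ CARD('n)"
proof -
  obtain Cp where Cp: "\<And>t K. finite (K::int set) \<Longrightarrow>
      (\<Sum>k\<in>K. \<phi> (t - real_of_int k) * (1 + \<bar>t - real_of_int k\<bar>)) \<le> Cp" using phi_sum by blast
  obtain Cd where Cd: "\<And>t K. finite (K::int set) \<Longrightarrow>
      (\<Sum>k\<in>K. \<bar>deriv \<phi> (t - real_of_int k)\<bar> * (1 + \<bar>t - real_of_int k\<bar>)) \<le> Cd" using dphi_sum by blast
  define Cm where "Cm = max 0 (max Cp Cd)"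
  show ?thesis
  proof (intro exI[of _ Cm] conjI allI)
    show "Cm \<ge> 0" unfolding Cm_def by simp
    fix n :: nat and a b :: "real^'n" and t :: "'n \<Rightarrow> real" and i :: 'n
    show "(\<Sum>k\<in>Kset a b n. \<Prod>j\<in>UNIV. (if j = i then \<bar>deriv \<phi> (t j - real_of_int (k$j))\<bar> else \<phi> (t j - real_of_int (k$j)))
        * (1 + \<bar>t j - real_of_int (k$j)\<bar>)) \<le> Cm ^ CARD('n)"
      unfolding Kset_eq
    proof (rule box_prod_bound[where G = "\<lambda>j s. (if j = i then \<bar>deriv \<phi> s\<bar> else \<phi> s) * (1 + \<bar>s\<bar>)"])
      fix j s
      show "0 \<le> (if j = i then \<bar>deriv \<phi> s\<bar> else \<phi> s) * (1 + \<bar>s\<bar>)" by (auto simp: phi_nonneg)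
    next
      fix j
      show "(\<Sum>k\<in>{\<lceil>real n * a $ j\<rceil>..\<lfloor>real n * b $ j\<rfloor> - 1}.
           (if j = i then \<bar>deriv \<phi> (t j - real_of_int k)\<bar> else \<phi> (t j - real_of_int k)) * (1 + \<bar>t j - real_of_int k\<bar>)) \<le> Cm"
      proof (cases "j = i")
        case True
        thus ?thesis using Cd[of "{\<lceil>real n * a $ j\<rceil>..\<lfloor>real n * b $ j\<rfloor> - 1}" "t j"] unfolding Cm_def by simp
      next
        case False
        thus ?thesis using Cp[of "{\<lceil>real n * a $ j\<rceil>..\<lfloor>real n * b $ j\<rfloor> - 1}" "t j"] unfolding Cm_def by simp
      qed
    qed simp
  qed
qed

end

context mainloc begin

lemma N2_exists: "\<exists>N2::nat. N2 \<ge> 1 \<and> (\<forall>n\<ge>N2. \<forall>i. 3 \<le> real n * (b$i - a$i))"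
proof -
  define S where "S = (\<Sum>i\<in>UNIV. 3 / (b$i - a$i))"
  have pos: "b$i - a$i > 0" for i using ab[of i] by simp
  have le: "3 / (b$i - a$i) \<le> S" for i
    unfolding S_def using pos by (intro member_le_sum) (auto intro: less_imp_le)
  show ?thesis
  proof (intro exI[of _ "nat \<lceil>S\<rceil> + 1"] conjI allI impI)
    fix n i assume n: "nat \<lceil>S\<rceil> + 1 \<le> n"
    have "S \<le> real n" using n by linarith
    hence "3 / (b$i - a$i) \<le> real n" using le[of i] by linarith
    thus "3 \<le> real n * (b$i - a$i)" using pos[of i] by (simp add: divide_le_eq)
  qed simp
qed

lemma lip_est:
  "\<exists>N2 A. A \<ge> 0 \<and> (\<forall>n\<ge>N2. \<forall>E. (\<forall>z\<in>cbox a b. \<bar>KNN \<sigma> a b n f z - f z\<bar> \<le> E) \<longrightarrow>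
     (\<forall>x\<in>cbox a b. \<forall>y\<in>cbox a b. \<bar>KNN \<sigma> a b n f x - KNN \<sigma> a b n f y\<bar>
        \<le> A * real n * norm (x - y) * (W (1 / real n) + E)))"
proof -
  obtain c0 where c0: "c0 > 0" "\<And>n x. (\<forall>i. 3 \<le> real n * (b$i - a$i)) \<Longrightarrow> x \<in> cbox a b \<Longrightarrow>
      c0 \<le> (\<Sum>k\<in>Kset a b n. Psi_sigma \<sigma> (real n *\<^sub>R x - kvec k))"
    using denom_lower by blast
  obtain Cm where Cm: "Cm \<ge> 0" "\<And>n t i.
    (\<Sum>k\<in>Kset a b n. \<Prod>j\<in>UNIV. (if j = i then \<bar>deriv \<phi> (t j - real_of_int (k$j))\<bar> else \<phi> (t j - real_of_int (k$j)))
        * (1 + \<bar>t j - real_of_int (k$j)\<bar>)) \<le> Cm ^ CARD('n)"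
    using G_box_bound by blast
  obtain N2 :: nat where N2: "N2 \<ge> 1" "\<And>n i. n \<ge> N2 \<Longrightarrow> 3 \<le> real n * (b$i - a$i)"
    using N2_exists by blast
  define dd where "dd = real CARD('n)"
  define A where "A = dd * Cm ^ CARD('n) * (1 + dd) / c0"
  have A0: "A \<ge> 0" unfolding A_def dd_def using Cm c0 by simp
  show ?thesis
  proof (intro exI[of _ N2] exI[of _ A] conjI A0 allI impI ballI)
    fix n :: nat and E :: real and x y :: "real^'n"
    assume n: "N2 \<le> n" and hypE: "\<forall>z\<in>cbox a b. \<bar>KNN \<sigma> a b n f z - f z\<bar> \<le> E"
      and x: "x \<in> cbox a b" and y: "y \<in> cbox a b"
    show "\<bar>KNN \<sigma> a b n f x - KNN \<sigma> a b n f y\<bar> \<le> A * real n * norm (x - y) * (W (1 / real n) + E)"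
    proof -
      have n1: "real n \<ge> 1" using n N2(1) by simp
      have n3: "\<forall>i. 3 \<le> real n * (b$i - a$i)" using N2(2) n by blast
      have E0: "E \<ge> 0" using hypE x by (meson abs_ge_zero order_trans)
      define K where "K = Kset a b n"
      define F where "F = (\<lambda>k. real n ^ CARD('n) * integral (Rbox k n) f)"
      define h where "h = x - y"
      define cc where "cc = (\<lambda>k (j::'n). real n * y$j - real_of_int (k$j))"
      define e where "e = (\<lambda>j. real n * h$j)"
      define P where "P = (\<lambda>k s. \<Prod>j\<in>UNIV. \<phi> (cc k j + s * e j))"
      define P' where "P' = (\<lambda>k s. \<Sum>i\<in>UNIV. (e i * deriv \<phi> (cc k i + s * e i)) * (\<Prod>j\<in>UNIV - {i}. \<phi> (cc k j + s * e j)))"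
      define N where "N = (\<lambda>s. \<Sum>k\<in>K. F k * P k s)"
      define D where "D = (\<lambda>s. \<Sum>k\<in>K. P k s)"
      define N' where "N' = (\<lambda>s. \<Sum>k\<in>K. F k * P' k s)"
      define D' where "D' = (\<lambda>s. \<Sum>k\<in>K. P' k s)"
      define zz where "zz = (\<lambda>s::real. y + s *\<^sub>R h)"
      have psi: "Psi_sigma \<sigma> (real n *\<^sub>R zz s - kvec k) = P k s" for k s
        unfolding Psi_eq P_def zz_def cc_def e_def by (rule prod.cong) (simp_all add: algebra_simps)
      have knn: "KNN \<sigma> a b n f (zz s) = N s / D s" for s
        unfolding KNN_def N_def D_def psi F_def K_def by simp
      have zzI: "zz s \<in> cbox a b" if "s \<in> {0..1}" for s
      proof -
        have "zz s = (1 - s) *\<^sub>R y + s *\<^sub>R x" unfolding zz_def h_def by (simp add: algebra_simps)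
        thus ?thesis using convexD[OF I_convex y x, of "1 - s" s] that by simp
      qed
      have Dlow: "c0 \<le> D s" if "s \<in> {0..1}" for s
        using c0(2)[OF n3 zzI[OF that]] unfolding psi D_def K_def .
      have dP: "(P k has_real_derivative P' k s) (at s)" for k s
        unfolding P_def P'_def by (rule deriv_Pi)
      have dN: "(N has_real_derivative N' s) (at s)" for s
        unfolding N_def N'_def by (intro DERIV_sum DERIV_cmult dP)
      have dD: "(D has_real_derivative D' s) (at s)" for s
        unfolding D_def D'_def by (intro DERIV_sum dP)
      have dg: "((\<lambda>s. N s / D s) has_real_derivative (N' s * D s - N s * D' s) / (D s * D s)) (at s)"
        if "0 \<le> s" "s \<le> 1" for s
        using DERIV_divide[OF dN dD] Dlow[of s] c0(1) that by auto
      obtain \<xi> where xi: "0 < \<xi>" "\<xi> < 1"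
        "N 1 / D 1 - N 0 / D 0 = (1 - 0) * ((N' \<xi> * D \<xi> - N \<xi> * D' \<xi>) / (D \<xi> * D \<xi>))"
        using MVT2[of 0 1 "\<lambda>s. N s / D s", OF _ dg] by auto
      have zz1: "zz 1 = x" and zz0: "zz 0 = y" unfolding zz_def h_def by simp_all
      have diff: "KNN \<sigma> a b n f x - KNN \<sigma> a b n f y = (N' \<xi> * D \<xi> - N \<xi> * D' \<xi>) / (D \<xi> * D \<xi>)"
        using xi(3) knn[of 1] knn[of 0] unfolding zz1 zz0 by simp
      define z where "z = zz \<xi>"
      have zI: "z \<in> cbox a b" unfolding z_def using xi by (intro zzI) auto
      have Dxi: "D \<xi> \<ge> c0" using Dlow xi by auto
      hence Dpos: "D \<xi> > 0" using c0(1) by simp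
      define t where "t = (\<lambda>j. real n * z$j)"
      have uu: "cc k j + \<xi> * e j = t j - real_of_int (k$j)" for k j
        unfolding cc_def e_def t_def z_def zz_def by (simp add: algebra_simps)
      define Gp where "Gp = (\<lambda>k i. \<Prod>j\<in>UNIV. (if j = i then \<bar>deriv \<phi> (t j - real_of_int (k$j))\<bar> else \<phi> (t j - real_of_int (k$j))))"
      define Gq where "Gq = (\<lambda>k i. \<Prod>j\<in>UNIV. (if j = i then \<bar>deriv \<phi> (t j - real_of_int (k$j))\<bar> else \<phi> (t j - real_of_int (k$j))) * (1 + \<bar>t j - real_of_int (k$j)\<bar>))"
      define Qk where "Qk = (\<lambda>k. \<Prod>j\<in>UNIV. 1 + \<bar>t j - real_of_int (k$j)\<bar>)"
      have P'xi: "P' k \<xi> = (\<Sum>i\<in>UNIV. (e i * deriv \<phi> (t i - real_of_int (k$i))) * (\<Prod>j\<in>UNIV - {i}. \<phi> (t j - real_of_int (k$j))))" for k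
        unfolding P'_def uu ..
      have B1: "\<bar>P' k \<xi>\<bar> \<le> (\<Sum>i\<in>UNIV. \<bar>e i\<bar> * Gp k i)" for k
        unfolding P'xi Gp_def by (rule P'_bound)
      have Gp0: "Gp k i \<ge> 0" for k i unfolding Gp_def by (intro prod_nonneg) (auto simp: phi_nonneg)
      have B2: "\<bar>P' k \<xi>\<bar> \<le> (\<Sum>i\<in>UNIV. \<bar>e i\<bar> * Gq k i)" for k
      proof -
        have "(\<Sum>i\<in>UNIV. \<bar>e i\<bar> * Gp k i) \<le> (\<Sum>i\<in>UNIV. \<bar>e i\<bar> * Gq k i)"
          unfolding Gp_def Gq_def by (intro sum_mono mult_left_mono Hp_le_G) auto
        thus ?thesis using B1[of k] by linarith
      qed
      have W0: "W (1 / real n) \<ge> 0" by (intro mc_nonneg) simp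
      have B3: "\<bar>F k - f z\<bar> * \<bar>P' k \<xi>\<bar> \<le> (1 + dd) * W (1 / real n) * (\<Sum>i\<in>UNIV. \<bar>e i\<bar> * Gq k i)"
        if k: "k \<in> K" for k
      proof -
        have Fb: "\<bar>F k - f z\<bar> \<le> (1 + dd) * W (1 / real n) * Qk k"
          unfolding F_def Qk_def t_def dd_def using F_bound[of n k z] n1 k zI unfolding K_def by simp
        have "\<bar>F k - f z\<bar> * \<bar>P' k \<xi>\<bar> \<le> ((1 + dd) * W (1 / real n) * Qk k) * (\<Sum>i\<in>UNIV. \<bar>e i\<bar> * Gp k i)"
          using Fb B1[of k] by (intro mult_mono) auto
        also have "\<dots> = (1 + dd) * W (1 / real n) * (\<Sum>i\<in>UNIV. \<bar>e i\<bar> * (Gp k i * Qk k))"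
          by (simp add: sum_distrib_left sum_distrib_right mult_ac)
        also have "(\<Sum>i\<in>UNIV. \<bar>e i\<bar> * (Gp k i * Qk k)) = (\<Sum>i\<in>UNIV. \<bar>e i\<bar> * Gq k i)"
          unfolding Gp_def Gq_def Qk_def G_split ..
        finally show ?thesis .
      qed
      define T where "T = real n * dd * norm h * Cm ^ CARD('n)"
      have T0: "T \<ge> 0" unfolding T_def dd_def using Cm(1) by simp
      have sumGq: "(\<Sum>k\<in>K. \<Sum>i\<in>UNIV. \<bar>e i\<bar> * Gq k i) \<le> T"
      proof -
        have "(\<Sum>k\<in>K. \<Sum>i\<in>UNIV. \<bar>e i\<bar> * Gq k i) = (\<Sum>i\<in>UNIV. \<bar>e i\<bar> * (\<Sum>k\<in>K. Gq k i))"
          by (simp add: sum.swap[of _ K] sum_distrib_left)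
        also have "\<dots> \<le> (\<Sum>i\<in>UNIV. \<bar>e i\<bar> * Cm ^ CARD('n))"
          unfolding Gq_def K_def by (intro sum_mono mult_left_mono Cm(2)) auto
        also have "\<dots> = real n * (\<Sum>i\<in>UNIV. \<bar>h$i\<bar>) * Cm ^ CARD('n)"
          unfolding e_def by (simp add: abs_mult sum_distrib_left sum_distrib_right)
        also have "\<dots> \<le> real n * (dd * norm h) * Cm ^ CARD('n)"
        proof -
          have "(\<Sum>i\<in>UNIV. \<bar>h$i\<bar>) \<le> (\<Sum>i\<in>(UNIV::'n set). norm h)"
            by (intro sum_mono component_le_norm_cart)
          hence "(\<Sum>i\<in>UNIV. \<bar>h$i\<bar>) \<le> dd * norm h" unfolding dd_def by simp
          thus ?thesis using Cm(1) by (intro mult_right_mono mult_left_mono) auto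
        qed
        finally show ?thesis unfolding T_def by (simp add: mult_ac)
      qed
      have S1: "(\<Sum>k\<in>K. \<bar>F k - f z\<bar> * \<bar>P' k \<xi>\<bar>) \<le> (1 + dd) * W (1 / real n) * T"
      proof -
        have "(\<Sum>k\<in>K. \<bar>F k - f z\<bar> * \<bar>P' k \<xi>\<bar>) \<le> (\<Sum>k\<in>K. (1 + dd) * W (1 / real n) * (\<Sum>i\<in>UNIV. \<bar>e i\<bar> * Gq k i))"
          using B3 by (rule sum_mono)
        also have "\<dots> = (1 + dd) * W (1 / real n) * (\<Sum>k\<in>K. \<Sum>i\<in>UNIV. \<bar>e i\<bar> * Gq k i)"
          by (simp add: sum_distrib_left)
        also have "\<dots> \<le> (1 + dd) * W (1 / real n) * T"
          using sumGq W0 unfolding dd_def by (intro mult_left_mono) auto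
        finally show ?thesis .
      qed
      have S2: "\<bar>D' \<xi>\<bar> \<le> T"
      proof -
        have "\<bar>D' \<xi>\<bar> \<le> (\<Sum>k\<in>K. \<bar>P' k \<xi>\<bar>)" unfolding D'_def by (rule sum_abs)
        also have "\<dots> \<le> (\<Sum>k\<in>K. \<Sum>i\<in>UNIV. \<bar>e i\<bar> * Gq k i)" using B2 by (rule sum_mono)
        finally show ?thesis using sumGq by linarith
      qed
      have fz: "\<bar>f z - N \<xi> / D \<xi>\<bar> \<le> E"
      proof -
        have "\<bar>KNN \<sigma> a b n f z - f z\<bar> \<le> E" using hypE zI by blast
        thus ?thesis unfolding z_def knn by (simp add: abs_minus_commute)
      qed
      have ident: "(N' \<xi> * D \<xi> - N \<xi> * D' \<xi>) / (D \<xi> * D \<xi>)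
          = ((\<Sum>k\<in>K. (F k - f z) * P' k \<xi>) + (f z - N \<xi> / D \<xi>) * D' \<xi>) / D \<xi>"
      proof -
        have eq: "(\<Sum>k\<in>K. (F k - f z) * P' k \<xi>) = N' \<xi> - f z * D' \<xi>"
          unfolding N'_def D'_def by (simp add: left_diff_distrib sum_subtractf sum_distrib_left)
        show ?thesis unfolding eq using Dpos by (simp add: field_simps)
      qed
      have num: "\<bar>(\<Sum>k\<in>K. (F k - f z) * P' k \<xi>) + (f z - N \<xi> / D \<xi>) * D' \<xi>\<bar> \<le> (1 + dd) * W (1 / real n) * T + E * T"
      proof -
        have "\<bar>(\<Sum>k\<in>K. (F k - f z) * P' k \<xi>)\<bar> \<le> (\<Sum>k\<in>K. \<bar>(F k - f z) * P' k \<xi>\<bar>)"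
          by (rule sum_abs)
        also have "\<dots> = (\<Sum>k\<in>K. \<bar>F k - f z\<bar> * \<bar>P' k \<xi>\<bar>)" by (simp only: abs_mult)
        finally have "\<bar>(\<Sum>k\<in>K. (F k - f z) * P' k \<xi>)\<bar> \<le> (\<Sum>k\<in>K. \<bar>F k - f z\<bar> * \<bar>P' k \<xi>\<bar>)" .
        moreover have "\<bar>(f z - N \<xi> / D \<xi>) * D' \<xi>\<bar> \<le> E * T"
          unfolding abs_mult using fz S2 E0 by (intro mult_mono) auto
        moreover have "\<bar>(\<Sum>k\<in>K. (F k - f z) * P' k \<xi>) + (f z - N \<xi> / D \<xi>) * D' \<xi>\<bar>
           \<le> \<bar>(\<Sum>k\<in>K. (F k - f z) * P' k \<xi>)\<bar> + \<bar>(f z - N \<xi> / D \<xi>) * D' \<xi>\<bar>" by (rule abs_triangle_ineq)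
        ultimately show ?thesis using S1 by linarith
      qed
      have "\<bar>KNN \<sigma> a b n f x - KNN \<sigma> a b n f y\<bar>
          = \<bar>(\<Sum>k\<in>K. (F k - f z) * P' k \<xi>) + (f z - N \<xi> / D \<xi>) * D' \<xi>\<bar> / D \<xi>"
        unfolding diff ident using Dpos by simp
      also have "\<dots> \<le> ((1 + dd) * W (1 / real n) * T + E * T) / D \<xi>"
        using num Dpos by (intro divide_right_mono) auto
      also have "\<dots> \<le> ((1 + dd) * W (1 / real n) * T + E * T) / c0"
      proof -
        have "0 \<le> (1 + dd) * W (1 / real n) * T + E * T" using W0 T0 E0 unfolding dd_def by simp
        thus ?thesis using Dxi c0(1) by (intro divide_left_mono) auto
      qed
      also have "\<dots> \<le> A * real n * norm (x - y) * (W (1 / real n) + E)"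
      proof -
        have "(1 + dd) * W (1 / real n) * T + E * T \<le> (1 + dd) * T * (W (1 / real n) + E)"
          using T0 E0 unfolding dd_def by (simp add: algebra_simps mult_right_mono)
        hence "((1 + dd) * W (1 / real n) * T + E * T) / c0 \<le> (1 + dd) * T * (W (1 / real n) + E) / c0"
          using c0(1) by (intro divide_right_mono) auto
        also have "\<dots> = A * real n * norm (x - y) * (W (1 / real n) + E)"
          unfolding A_def T_def h_def by (simp add: ac_simps divide_inverse)
        finally show ?thesis .
      qed
      finally show ?thesis .
    qed
  qed
qed

end

lemma choose_q:
  fixes \<nu> B :: real
  assumes "0 < \<nu>" "\<nu> < 1" "B \<ge> 0"
  shows "\<exists>q. 0 < q \<and> q \<le> 1/2 \<and> B * (2 / q) powr \<nu> * q \<le> 1/2"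
proof -
  define c where "c = 1 / (2 * (B * 2 powr \<nu> + 1))"
  have Bp: "B * 2 powr \<nu> \<ge> 0" using assms by simp
  hence c0: "c > 0" unfolding c_def by simp
  define q where "q = min (1/2) (c powr (1 / (1 - \<nu>)))"
  have q0: "q > 0" unfolding q_def using c0 by simp
  have qc: "q powr (1 - \<nu>) \<le> c"
  proof -
    have "q powr (1 - \<nu>) \<le> (c powr (1 / (1 - \<nu>))) powr (1 - \<nu>)"
      unfolding q_def using q0 assms c0 by (intro powr_mono2) (auto simp: q_def)
    also have "\<dots> = c" using assms c0 by (simp add: powr_powr)
    finally show ?thesis .
  qed
  have eq: "(2 / q) powr \<nu> * q = 2 powr \<nu> * q powr (1 - \<nu>)"
  proof -
    have "(2 / q) powr \<nu> = 2 powr \<nu> / q powr \<nu>" using q0 by (simp add: powr_divide)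
    moreover have "q powr (1 - \<nu>) = q / q powr \<nu>" using q0 by (simp add: powr_diff)
    ultimately show ?thesis by simp
  qed
  have "B * (2 / q) powr \<nu> * q = B * 2 powr \<nu> * q powr (1 - \<nu>)" using eq by (simp add: mult.assoc)
  also have "\<dots> \<le> B * 2 powr \<nu> * c" using qc assms by (intro mult_left_mono) auto
  also have "\<dots> \<le> 1/2"
  proof -
    have "B * 2 powr \<nu> * c = (B * 2 powr \<nu>) / (2 * (B * 2 powr \<nu> + 1))" unfolding c_def by simp
    also have "\<dots> \<le> 1/2" using Bp by (simp add: divide_le_eq)
    finally show ?thesis .
  qed
  finally show ?thesis using q0 by (intro exI[of _ q]) (auto simp: q_def)
qed

lemma iterate:
  fixes W :: "real \<Rightarrow> real" and \<nu> B Wm :: real and N0 :: nat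
  assumes nu: "0 < \<nu>" "\<nu> < 1" and B: "B \<ge> 0" and N0: "N0 \<ge> 1"
    and Wm: "\<And>\<delta>. \<delta> > 0 \<Longrightarrow> W \<delta> \<le> Wm"
    and W0: "\<And>\<delta>. \<delta> > 0 \<Longrightarrow> W \<delta> \<ge> 0"
    and rec: "\<And>n \<delta>. n \<ge> N0 \<Longrightarrow> \<delta> > 0 \<Longrightarrow> real n * \<delta> \<le> 1 \<Longrightarrow>
               W \<delta> \<le> B * (real n powr (-\<nu>) + real n * \<delta> * W (1 / real n))"
  shows "\<exists>K \<delta>0. \<delta>0 > 0 \<and> (\<forall>\<delta>. 0 < \<delta> \<and> \<delta> \<le> \<delta>0 \<longrightarrow> W \<delta> \<le> K * \<delta> powr \<nu>)"
proof -
  obtain q where q: "0 < q" "q \<le> 1/2" "B * (2 / q) powr \<nu> * q \<le> 1/2" using choose_q[OF nu B] by blast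
  define R where "R = (2 / q) powr \<nu>"
  have R0: "R > 0" unfolding R_def using q by simp
  have kq: "B * R * q \<le> 1/2" unfolding R_def using q by simp
  define \<delta>0 where "\<delta>0 = q / (real N0 + 2)"
  have d0: "\<delta>0 > 0" unfolding \<delta>0_def using q by simp
  have Wm0: "Wm \<ge> 0" using W0[OF d0] Wm[OF d0] by simp
  define M where "M = Wm / \<delta>0 powr \<nu>"
  have M0: "M \<ge> 0" unfolding M_def using Wm0 by simp
  define K where "K = max M (2 * B * R * (1 + q * M))"
  have K0: "K \<ge> 0" unfolding K_def using M0 by simp
  have WM: "W \<delta> \<le> M * \<delta> powr \<nu>" if "\<delta> \<ge> \<delta>0" for \<delta>
  proof -
    have "W \<delta> \<le> Wm" using Wm d0 that by simp
    also have "Wm = M * \<delta>0 powr \<nu>" unfolding M_def using d0 by simp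
    also have "\<dots> \<le> M * \<delta> powr \<nu>" using M0 d0 that nu by (intro mult_left_mono powr_mono2) auto
    finally show ?thesis .
  qed
  have claim: "\<forall>\<delta>. \<delta>0 / 2 ^ m \<le> \<delta> \<and> \<delta> \<le> \<delta>0 \<longrightarrow> W \<delta> \<le> K * \<delta> powr \<nu>" for m
  proof (induction m)
    case 0
    show ?case
    proof (intro allI impI)
      fix \<delta> assume "\<delta>0 / 2 ^ 0 \<le> \<delta> \<and> \<delta> \<le> \<delta>0"
      hence "\<delta> \<ge> \<delta>0" by simp
      hence "W \<delta> \<le> M * \<delta> powr \<nu>" by (rule WM)
      also have "\<dots> \<le> K * \<delta> powr \<nu>" unfolding K_def by (intro mult_right_mono) auto
      finally show "W \<delta> \<le> K * \<delta> powr \<nu>" .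
    qed
  next
    case (Suc m)
    show ?case
    proof (intro allI impI)
      fix \<delta> assume d: "\<delta>0 / 2 ^ Suc m \<le> \<delta> \<and> \<delta> \<le> \<delta>0"
      show "W \<delta> \<le> K * \<delta> powr \<nu>"
      proof (cases "\<delta> \<ge> \<delta>0 / 2 ^ m")
        case True
        thus ?thesis using Suc.IH d by blast
      next
        case False
        have dpos: "\<delta> > 0" using d d0 by (smt (verit) divide_pos_pos zero_less_power)
        define n where "n = nat \<lfloor>q / \<delta>\<rfloor>"
        have qd: "q / \<delta> \<ge> real N0 + 2"
        proof -
          have "q / \<delta> \<ge> q / \<delta>0" using d dpos q by (intro divide_left_mono) auto
          also have "q / \<delta>0 = real N0 + 2" unfolding \<delta>0_def using q by simp
          finally show ?thesis .
        qed
        have nle: "real n \<le> q / \<delta>" unfolding n_def using qd by linarith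
        have ngt: "real n > q / \<delta> - 1" unfolding n_def using qd by linarith
        have nN0: "n \<ge> N0" unfolding n_def using qd by linarith
        have npos: "real n > 0" using nN0 N0 by simp
        have nd: "real n * \<delta> \<le> q" using nle dpos by (simp add: le_divide_eq)
        have nd1: "real n * \<delta> \<le> 1" using nd q by simp
        have inv_hi: "1 / real n \<le> 2 * \<delta> / q"
        proof -
          have h2: "q / (2 * \<delta>) = (q / \<delta>) / 2" by simp
          have "real N0 \<ge> 0" by simp
          moreover obtain r where r: "r = q / \<delta>" by blast
          ultimately have "r / 2 \<le> real n" using ngt qd unfolding r[symmetric] by linarith
          have "q / (2 * \<delta>) \<le> real n" using \<open>r / 2 \<le> real n\<close> unfolding h2 r .
          thus ?thesis using npos dpos q by (simp add: field_simps)
        qed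
        have inv_lo: "1 / real n \<ge> 2 * \<delta>"
        proof -
          have "1 / real n \<ge> \<delta> / q" using nle npos dpos q by (simp add: field_simps)
          moreover have "\<delta> / q \<ge> 2 * \<delta>" using q dpos by (simp add: field_simps)
          ultimately show ?thesis by linarith
        qed
        have pw: "(1 / real n) powr \<nu> \<le> R * \<delta> powr \<nu>"
        proof -
          have "(1 / real n) powr \<nu> \<le> (2 * \<delta> / q) powr \<nu>" using inv_hi npos nu by (intro powr_mono2) auto
          moreover have "(2 * \<delta> / q) powr \<nu> = R * \<delta> powr \<nu>"
          proof -
            have e: "2 * \<delta> / q = (2 / q) * \<delta>" by simp
            show ?thesis unfolding e R_def using q dpos by (intro powr_mult)
          qed
          ultimately show ?thesis by simp
        qed
        have Wn: "W (1 / real n) \<le> (K + M) * (R * \<delta> powr \<nu>)"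
        proof (cases "1 / real n \<le> \<delta>0")
          case True
          have e2: "\<delta>0 / 2 ^ m = 2 * (\<delta>0 / 2 ^ Suc m)" by simp
          have "\<delta>0 / 2 ^ m \<le> 1 / real n" using inv_lo d unfolding e2 by linarith
          hence "W (1 / real n) \<le> K * (1 / real n) powr \<nu>" using Suc.IH True by blast
          also have "\<dots> \<le> K * (R * \<delta> powr \<nu>)" using pw K0 by (intro mult_left_mono)
          also have "\<dots> \<le> (K + M) * (R * \<delta> powr \<nu>)" using M0 R0 by (intro mult_right_mono) auto
          finally show ?thesis .
        next
          case False
          hence "W (1 / real n) \<le> M * (1 / real n) powr \<nu>" by (intro WM) auto
          also have "\<dots> \<le> M * (R * \<delta> powr \<nu>)" using pw M0 by (intro mult_left_mono)
          also have "\<dots> \<le> (K + M) * (R * \<delta> powr \<nu>)" using K0 R0 by (intro mult_right_mono) auto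
          finally show ?thesis .
        qed
        have "W \<delta> \<le> B * (real n powr (-\<nu>) + real n * \<delta> * W (1 / real n))"
          using rec[OF nN0 dpos nd1] .
        also have "real n powr (-\<nu>) = (1 / real n) powr \<nu>" using npos by (simp add: powr_minus_divide powr_divide)
        also have "B * ((1 / real n) powr \<nu> + real n * \<delta> * W (1 / real n))
            \<le> B * (R * \<delta> powr \<nu> + q * ((K + M) * (R * \<delta> powr \<nu>)))"
        proof (intro mult_left_mono add_mono B)
          show "(1 / real n) powr \<nu> \<le> R * \<delta> powr \<nu>" by (rule pw)
          have "real n * \<delta> * W (1 / real n) \<le> q * W (1 / real n)"
            using nd W0[of "1 / real n"] npos by (intro mult_right_mono) auto
          also have "\<dots> \<le> q * ((K + M) * (R * \<delta> powr \<nu>))" using Wn q by (intro mult_left_mono) auto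
          finally show "real n * \<delta> * W (1 / real n) \<le> q * ((K + M) * (R * \<delta> powr \<nu>))" .
        qed
        also have "B * (R * \<delta> powr \<nu> + q * ((K + M) * (R * \<delta> powr \<nu>)))
            = (B * R * (1 + q * M)) * \<delta> powr \<nu> + (B * R * q) * K * \<delta> powr \<nu>"
          by (simp add: algebra_simps)
        also have "\<dots> \<le> (K / 2) * \<delta> powr \<nu> + (1/2) * K * \<delta> powr \<nu>"
        proof (intro add_mono mult_right_mono)
          show "B * R * (1 + q * M) \<le> K / 2" unfolding K_def by simp
          show "B * R * q \<le> 1/2" by (rule kq)
        qed (use K0 in auto)
        also have "\<dots> = K * \<delta> powr \<nu>" by simp
        finally show ?thesis .
      qed
    qed
  qed
  have "\<forall>\<delta>. 0 < \<delta> \<and> \<delta> \<le> \<delta>0 \<longrightarrow> W \<delta> \<le> K * \<delta> powr \<nu>"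
  proof (intro allI impI)
    fix \<delta> assume d: "0 < \<delta> \<and> \<delta> \<le> \<delta>0"
    obtain m where m: "\<delta>0 / \<delta> < 2 ^ m" using real_arch_pow[of 2 "\<delta>0 / \<delta>"] by auto
    have "\<delta>0 / 2 ^ m \<le> \<delta>" using m d by (simp add: field_simps)
    thus "W \<delta> \<le> K * \<delta> powr \<nu>" using claim[of m] d by blast
  qed
  then show ?thesis using d0 by blast
qed

theorem theorem3p2:
  fixes \<sigma> :: "real \<Rightarrow> real" and \<alpha> \<nu> :: real
    and a b :: "real ^ 'n" and f :: "real ^ 'n \<Rightarrow> real"
  assumes sig_mono: "mono \<sigma>"
    and sig_bot: "(\<sigma> \<longlongrightarrow> 0) at_bot"
    and sig_top: "(\<sigma> \<longlongrightarrow> 1) at_top"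
    and sig_odd: "\<And>x. \<sigma> (- x) - 1/2 = - (\<sigma> x - 1/2)"
    and sig_C2_1: "\<And>x. \<sigma> differentiable (at x)"
    and sig_C2_2: "\<And>x. deriv \<sigma> differentiable (at x)"
    and sig_C2_3: "continuous_on UNIV (deriv (deriv \<sigma>))"
    and sig_concave: "concave_on {0..} \<sigma>"
    and alpha: "\<alpha> > 1"
    and sig_decay: "\<sigma> \<in> O[at_bot](\<lambda>x. \<bar>x\<bar> powr (-1 - \<alpha>))"
    and sig1: "\<sigma> 1 < 1"
    and M1: "M_beta 1 (deriv (phi_sigma \<sigma>)) < top"
    and ab: "\<And>i. a $ i < b $ i"
    and fcont: "continuous_on (cbox a b) f"
    and nu: "0 < \<nu>" "\<nu> < 1"
    and rate: "\<exists>C. \<forall>\<^sub>F n in sequentially. \<forall>x\<in>cbox a b.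
                 \<bar>KNN \<sigma> a b n f x - f x\<bar> \<le> C * real n powr (- \<nu>)"
  shows "f \<in> LipClass (cbox a b) \<nu>"
proof -
  have ne: "cbox a b \<noteq> {}" using ab by (simp add: interval_eq_empty_cart not_less less_imp_le)
  interpret M: mainloc \<sigma> \<alpha> a b f
    by unfold_locales (use assms ne in \<open>auto simp: convex_box\<close>)
  obtain C N1 where CN1: "\<And>n x. n \<ge> N1 \<Longrightarrow> x \<in> cbox a b \<Longrightarrow> \<bar>KNN \<sigma> a b n f x - f x\<bar> \<le> C * real n powr (- \<nu>)"
    using rate unfolding eventually_sequentially by blast
  obtain N2 A where A: "A \<ge> 0" and NA: "\<And>n E x y. n \<ge> N2 \<Longrightarrow> (\<forall>z\<in>cbox a b. \<bar>KNN \<sigma> a b n f z - f z\<bar> \<le> E) \<Longrightarrow>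
      x \<in> cbox a b \<Longrightarrow> y \<in> cbox a b \<Longrightarrow>
      \<bar>KNN \<sigma> a b n f x - KNN \<sigma> a b n f y\<bar> \<le> A * real n * norm (x - y) * (M.W (1 / real n) + E)"
    using M.lip_est by blast
  define N0 where "N0 = max (max N1 N2) 1"
  define C' where "C' = max C 0"
  define B where "B = (2 + A) * C' + A"
  have B0: "B \<ge> 0" unfolding B_def C'_def using A by simp
  obtain Wm where Wm: "\<And>\<delta>. \<delta> \<ge> 0 \<Longrightarrow> M.W \<delta> \<le> Wm" using M.mc_bound by blast
  have rec: "M.W \<delta> \<le> B * (real n powr (-\<nu>) + real n * \<delta> * M.W (1 / real n))"
    if n: "n \<ge> N0" and d: "\<delta> > 0" and nd: "real n * \<delta> \<le> 1" for n \<delta>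
  proof (rule M.mc_le)
    show "\<delta> \<ge> 0" using d by simp
    fix x y assume x: "x \<in> cbox a b" and y: "y \<in> cbox a b" and xy: "norm (x - y) \<le> \<delta>"
    define E where "E = C * real n powr (- \<nu>)"
    have hypE: "\<forall>z\<in>cbox a b. \<bar>KNN \<sigma> a b n f z - f z\<bar> \<le> E"
      unfolding E_def using CN1 n unfolding N0_def by auto
    have E0: "E \<ge> 0" using hypE x by (meson abs_ge_zero order_trans)
    have EC: "E \<le> C' * real n powr (- \<nu>)" unfolding E_def C'_def by (intro mult_right_mono) auto
    have W0: "M.W (1 / real n) \<ge> 0" by (intro M.mc_nonneg) simp
    have n0: "real n \<ge> 0" by simp
    have L: "\<bar>KNN \<sigma> a b n f x - KNN \<sigma> a b n f y\<bar> \<le> A * real n * norm (x - y) * (M.W (1 / real n) + E)"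
      using NA[OF _ hypE x y] n unfolding N0_def by auto
    have "A * real n * norm (x - y) * (M.W (1 / real n) + E) \<le> A * (real n * \<delta>) * (M.W (1 / real n) + E)"
      using A xy W0 E0 by (simp add: mult_left_mono mult_right_mono mult.assoc)
    also have "\<dots> = A * (real n * \<delta>) * M.W (1 / real n) + A * (real n * \<delta>) * E" by (simp add: algebra_simps)
    also have "\<dots> \<le> A * (real n * \<delta>) * M.W (1 / real n) + A * E"
    proof -
      have "(A * E) * (real n * \<delta>) \<le> (A * E) * 1" using nd A E0 by (intro mult_left_mono) auto
      hence "A * (real n * \<delta>) * E \<le> A * E" by (simp add: mult_ac)
      thus ?thesis by linarith
    qed
    finally have L2: "\<bar>KNN \<sigma> a b n f x - KNN \<sigma> a b n f y\<bar> \<le> A * (real n * \<delta>) * M.W (1 / real n) + A * E"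
      using L by linarith
    have "\<bar>f x - f y\<bar> \<le> \<bar>KNN \<sigma> a b n f x - f x\<bar> + \<bar>KNN \<sigma> a b n f x - KNN \<sigma> a b n f y\<bar> + \<bar>KNN \<sigma> a b n f y - f y\<bar>"
      by linarith
    also have "\<dots> \<le> E + (A * (real n * \<delta>) * M.W (1 / real n) + A * E) + E"
      using hypE x y L2 by (intro add_mono) auto
    also have "\<dots> = (2 + A) * E + A * (real n * \<delta>) * M.W (1 / real n)" by (simp add: algebra_simps)
    also have "\<dots> \<le> (2 + A) * (C' * real n powr (- \<nu>)) + B * (real n * \<delta> * M.W (1 / real n))"
    proof (intro add_mono)
      show "(2 + A) * E \<le> (2 + A) * (C' * real n powr (- \<nu>))" using EC A by (intro mult_left_mono) auto
      have "0 \<le> real n * \<delta> * M.W (1 / real n)" using d W0 by simp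
      moreover have "A \<le> B" unfolding B_def C'_def using A by simp
      ultimately show "A * (real n * \<delta>) * M.W (1 / real n) \<le> B * (real n * \<delta> * M.W (1 / real n))"
        by (simp add: mult_right_mono mult.assoc)
    qed
    also have "\<dots> \<le> B * real n powr (- \<nu>) + B * (real n * \<delta> * M.W (1 / real n))"
    proof -
      have "(2 + A) * C' \<le> B" unfolding B_def using A by simp
      hence "(2 + A) * C' * real n powr (- \<nu>) \<le> B * real n powr (- \<nu>)" by (intro mult_right_mono) auto
      thus ?thesis by (simp add: mult.assoc)
    qed
    also have "\<dots> = B * (real n powr (-\<nu>) + real n * \<delta> * M.W (1 / real n))" by (simp add: algebra_simps)
    finally show "\<bar>f x - f y\<bar> \<le> B * (real n powr (-\<nu>) + real n * \<delta> * M.W (1 / real n))" .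
  qed
  obtain K \<delta>0 where K: "\<delta>0 > 0" "\<And>\<delta>. 0 < \<delta> \<Longrightarrow> \<delta> \<le> \<delta>0 \<Longrightarrow> M.W \<delta> \<le> K * \<delta> powr \<nu>"
    using iterate[of \<nu> B N0 M.W Wm, OF nu B0 _ _ _ rec] Wm M.mc_nonneg unfolding N0_def by force
  have "(\<lambda>\<delta>. modcont (cbox a b) f \<delta>) \<in> O[at_right 0](\<lambda>\<delta>. \<delta> powr \<nu>)"
  proof (rule landau_o.bigI[of "max K 1"])
    show "max K 1 > 0" by simp
    show "\<forall>\<^sub>F \<delta> in at_right 0. norm (modcont (cbox a b) f \<delta>) \<le> max K 1 * norm (\<delta> powr \<nu>)"
      unfolding eventually_at_right_field
    proof (intro exI[of _ \<delta>0] conjI allI impI K(1))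
      fix \<delta> :: real assume d: "0 < \<delta>" "\<delta> < \<delta>0"
      have "norm (modcont (cbox a b) f \<delta>) = M.W \<delta>" using M.mc_nonneg[of \<delta>] d by simp
      also have "\<dots> \<le> K * \<delta> powr \<nu>" using K(2)[of \<delta>] d by simp
      also have "\<dots> \<le> max K 1 * \<delta> powr \<nu>" by (intro mult_right_mono) auto
      also have "\<dots> = max K 1 * norm (\<delta> powr \<nu>)" by simp
      finally show "norm (modcont (cbox a b) f \<delta>) \<le> max K 1 * norm (\<delta> powr \<nu>)" .
    qed
  qed
  thus ?thesis unfolding LipClass_def using fcont by simp
qed

end
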